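(* Let $(S,\mathfrak n,k)$ be a Noetherian local ring, $I$ an $\mathfrak n$-primary ideal, and $R=S/I$ with maximal ideal $\mathfrak m=\mathfrak n/I$. Then $$s(R)\le \ell_S(R)-\sum_{i=0}^{v_S(R)-1}h_S(i)+v_S(R)-1.$$ Moreover, if $I$ is not a power of $\mathfrak n$, the following are equivalent: 1) equality holds above; 2) $\mu(\mathfrak m^{v_S(R)})=1$; 3) the Hilbert function of $R$ satisfies $h_R(i)=h_S(i)$ for $0\le i\le v_S(R)-1$, $h_R(i)=1$ for $v_S(R)\le i\le s(R)$, and $h_R(i)=0$ for $i>s(R)$.
   Context: For an Artinian local ring $(R,\mathfrak m)$, $s(R)$ is the largest $s$ with $\mathfrak m^s\neq0$. For a local ring $(A,\mathfrak a)$, $h_A(i)=\ell_A(\mathfrak a^i/\mathfrak a^{i+1})$. $v_S(R)=\max\{n\mid I\subseteq\mathfrak n^n\}$. $\mu(M)$ is the minimal number of generators of $M$. *)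

theory Defs
  imports "HOL-Algebra.Ideal_Product" "HOL-Algebra.Ring_Divisibility" "HOL-Algebra.QuotRing"
    "HOL-Library.Extended_Nat"
begin

primrec ideal_pow :: "('a, 'b) ring_scheme \<Rightarrow> 'a set \<Rightarrow> nat \<Rightarrow> 'a set" where
  "ideal_pow R I 0 = carrier R"
| "ideal_pow R I (Suc k) = ideal_prod R I (ideal_pow R I k)"

definition local_ring :: "('a, 'b) ring_scheme \<Rightarrow> 'a set \<Rightarrow> bool" where
  "local_ring R n \<longleftrightarrow> cring R \<and> maximalideal n R \<and> (\<forall>J. maximalideal J R \<longrightarrow> J = n)"

definition noetherian_local_ring :: "('a, 'b) ring_scheme \<Rightarrow> 'a set \<Rightarrow> bool" where
  "noetherian_local_ring S n \<longleftrightarrow> noetherian_ring S \<and> local_ring S n"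

definition primary_to :: "('a, 'b) ring_scheme \<Rightarrow> 'a set \<Rightarrow> 'a set \<Rightarrow> bool" where
  "primary_to R n I \<longleftrightarrow> ideal I R \<and> I \<noteq> carrier R
     \<and> (\<forall>a\<in>carrier R. \<forall>b\<in>carrier R. a \<otimes>\<^bsub>R\<^esub> b \<in> I \<longrightarrow> a \<notin> I \<longrightarrow> (\<exists>k::nat. b [^]\<^bsub>R\<^esub> k \<in> I))
     \<and> {x \<in> carrier R. \<exists>k::nat. x [^]\<^bsub>R\<^esub> k \<in> I} = n"

text \<open>Length of the R-module A/B, for ideals B \<subseteq> A of R: the supremum of the lengths r
  of strictly increasing chains of R-submodules of A/B, i.e. (by the correspondence theorem)
  of chains of ideals B = C_0 \<subset> C_1 \<subset> ... \<subset> C_r = A.\<close>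
definition module_length :: "('a, 'b) ring_scheme \<Rightarrow> 'a set \<Rightarrow> 'a set \<Rightarrow> enat" where
  "module_length R B A = Sup {enat r | r. \<exists>C :: nat \<Rightarrow> 'a set.
      C 0 = B \<and> C r = A \<and> (\<forall>i\<le>r. ideal (C i) R) \<and> (\<forall>i<r. C i \<subset> C (Suc i))}"

definition hilbert_fun :: "('a, 'b) ring_scheme \<Rightarrow> 'a set \<Rightarrow> nat \<Rightarrow> enat" where
  "hilbert_fun A a i = module_length A (ideal_pow A a (Suc i)) (ideal_pow A a i)"

definition socle_degree :: "('a, 'b) ring_scheme \<Rightarrow> 'a set \<Rightarrow> nat" where
  "socle_degree R m = (GREATEST s. ideal_pow R m s \<noteq> {\<zero>\<^bsub>R\<^esub>})"

definition v_order :: "('a, 'b) ring_scheme \<Rightarrow> 'a set \<Rightarrow> 'a set \<Rightarrow> nat" where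
  "v_order S n I = (GREATEST v. I \<subseteq> ideal_pow S n v)"

definition min_gens :: "('a, 'b) ring_scheme \<Rightarrow> 'a set \<Rightarrow> nat" where
  "min_gens R M = (LEAST r. \<exists>G. finite G \<and> card G = r \<and> G \<subseteq> M \<and> Idl\<^bsub>R\<^esub> G = M)"

definition quot_ideal :: "('a, 'b) ring_scheme \<Rightarrow> 'a set \<Rightarrow> 'a set \<Rightarrow> 'a set set" where
  "quot_ideal S I n = (\<lambda>x. I +>\<^bsub>S\<^esub> x) ` n"

end

theory Submission
  imports Defs
begin

lemma set_add_iff: "x \<in> A <+>\<^bsub>R\<^esub> B \<longleftrightarrow> (\<exists>a\<in>A. \<exists>b\<in>B. x = a \<oplus>\<^bsub>R\<^esub> b)"
  by (auto simp: set_add_def')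

lemma set_add_E:
  assumes "x \<in> A <+>\<^bsub>R\<^esub> B"
  obtains a b where "a \<in> A" "b \<in> B" "x = a \<oplus>\<^bsub>R\<^esub> b"
  using assms unfolding set_add_iff by blast

lemma set_add_I:
  assumes "a \<in> A" "b \<in> B"
  shows "a \<oplus>\<^bsub>R\<^esub> b \<in> A <+>\<^bsub>R\<^esub> B"
  using assms unfolding set_add_iff by blast

context cring
begin

lemma ideal_pow_ideal: "ideal X R \<Longrightarrow> ideal (ideal_pow R X k) R"
  by (induct k) (auto intro: oneideal ideal_prod_is_ideal)

lemma ideal_pow_one: "ideal X R \<Longrightarrow> ideal_pow R X 1 = X"
  by (simp add: ideal_prod_one)

lemma ideal_pow_Suc_sub: "ideal X R \<Longrightarrow> ideal_pow R X (Suc k) \<subseteq> ideal_pow R X k"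
  using ideal_prod_inter[of X "ideal_pow R X k"] ideal_pow_ideal[of X k] by auto

lemma ideal_pow_Suc_sub_X: "ideal X R \<Longrightarrow> ideal_pow R X (Suc k) \<subseteq> X"
  using ideal_prod_inter[of X "ideal_pow R X k"] ideal_pow_ideal[of X k] by auto

lemma ideal_pow_antimono: "ideal X R \<Longrightarrow> k \<le> j \<Longrightarrow> ideal_pow R X j \<subseteq> ideal_pow R X k"
proof (induct j)
  case 0 then show ?case by simp
next
  case (Suc j)
  then show ?case using ideal_pow_Suc_sub[of X j] by (cases "k = Suc j") auto
qed

lemma ideal_pow_add: "ideal X R \<Longrightarrow> ideal_pow R X (a + b) = ideal_prod R (ideal_pow R X a) (ideal_pow R X b)"
proof (induct a)
  case 0 then show ?case
    using ideal_prod_commute[of "carrier R" "ideal_pow R X b"] ideal_prod_one[of "ideal_pow R X b"]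
      ideal_pow_ideal[of X b] oneideal by simp
next
  case (Suc a) then show ?case
    using ideal_prod_assoc[of X "ideal_pow R X a" "ideal_pow R X b"] ideal_pow_ideal by simp
qed

lemma ideal_prod_mono_r:
  assumes "ideal Z R" "ideal Y R" "X \<subseteq> Y"
  shows "ideal_prod R Z X \<subseteq> ideal_prod R Z Y"
proof
  fix s assume "s \<in> ideal_prod R Z X" then show "s \<in> ideal_prod R Z Y"
  proof (induct s rule: ideal_prod.induct)
    case (prod i j) then show ?case using assms by (blast intro: ideal_prod.prod)
  next
    case (sum s1 s2) then show ?case by (blast intro: ideal_prod.sum)
  qed
qed

lemma ideal_prod_mono_l:
  assumes "ideal Z R" "ideal Y R" "X \<subseteq> Y"
  shows "ideal_prod R X Z \<subseteq> ideal_prod R Y Z"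
proof
  fix s assume "s \<in> ideal_prod R X Z" then show "s \<in> ideal_prod R Y Z"
  proof (induct s rule: ideal_prod.induct)
    case (prod i j) then show ?case using assms by (blast intro: ideal_prod.prod)
  next
    case (sum s1 s2) then show ?case by (blast intro: ideal_prod.sum)
  qed
qed

lemma ideal_pow_mono_base:
  assumes "ideal X R" "ideal Y R" "X \<subseteq> Y"
  shows "ideal_pow R X k \<subseteq> ideal_pow R Y k"
proof (induct k)
  case 0 then show ?case by simp
next
  case (Suc k)
  have "ideal_prod R X (ideal_pow R X k) \<subseteq> ideal_prod R X (ideal_pow R Y k)"
    by (rule ideal_prod_mono_r) (use assms Suc ideal_pow_ideal in auto)
  also have "\<dots> \<subseteq> ideal_prod R Y (ideal_pow R Y k)"
    by (rule ideal_prod_mono_l) (use assms ideal_pow_ideal in auto)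
  finally show ?case by simp
qed

lemma ideal_pow_mult: "ideal X R \<Longrightarrow> ideal_pow R X (a * b) = ideal_pow R (ideal_pow R X a) b"
proof (induct b)
  case 0 then show ?case by simp
next
  case (Suc b)
  have "a * Suc b = a + a * b" by simp
  then show ?case using Suc ideal_pow_add[of X a "a*b"] by simp
qed

lemma ideal_prod_elem:
  assumes "ideal X R" "ideal Y R" "x \<in> X" "y \<in> Y"
  shows "x \<otimes> y \<in> ideal_prod R X Y"
  using assms by (rule_tac ideal_prod.prod) 

lemma set_add_mono:
  "A \<subseteq> A' \<Longrightarrow> B \<subseteq> B' \<Longrightarrow> A <+>\<^bsub>R\<^esub> B \<subseteq> A' <+>\<^bsub>R\<^esub> B'"
  unfolding subset_iff set_add_iff by blast

lemma set_add_sub_ideal: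
  assumes "ideal K R" "A \<subseteq> K" "B \<subseteq> K"
  shows "A <+>\<^bsub>R\<^esub> B \<subseteq> K"
  unfolding subset_iff set_add_iff
  using additive_subgroup.a_closed[OF ideal.axioms(1)[OF assms(1)]] assms(2,3) by blast

lemma set_add_sup1:
  assumes "ideal A R" "ideal B R" shows "A \<subseteq> A <+>\<^bsub>R\<^esub> B"
proof
  fix x assume "x \<in> A"
  then have "x = x \<oplus> \<zero>" using assms ideal.Icarr by fastforce
  then show "x \<in> A <+>\<^bsub>R\<^esub> B" unfolding set_add_iff
    using \<open>x \<in> A\<close> additive_subgroup.zero_closed[OF ideal.axioms(1)[OF assms(2)]] by blast
qed

lemma set_add_sup2:
  assumes "ideal A R" "ideal B R" shows "B \<subseteq> A <+>\<^bsub>R\<^esub> B"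
proof
  fix x assume "x \<in> B"
  then have "x = \<zero> \<oplus> x" using assms ideal.Icarr by fastforce
  then show "x \<in> A <+>\<^bsub>R\<^esub> B" unfolding set_add_iff
    using \<open>x \<in> B\<close> additive_subgroup.zero_closed[OF ideal.axioms(1)[OF assms(1)]] by blast
qed

lemma set_add_absorb:
  assumes "ideal A R" "ideal B R" "B \<subseteq> A" shows "A <+>\<^bsub>R\<^esub> B = A"
  using set_add_sup1[OF assms(1,2)] set_add_sub_ideal[OF assms(1) _ assms(3)] by auto

lemma set_add_absorb2:
  assumes "ideal A R" "ideal B R" "A \<subseteq> B" shows "A <+>\<^bsub>R\<^esub> B = B"
  using set_add_sup2[OF assms(1,2)] set_add_sub_ideal[OF assms(2) assms(3)] by auto

lemma set_add_assoc_ideal: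
  assumes "ideal A R" "ideal B R" "ideal C R"
  shows "(A <+>\<^bsub>R\<^esub> B) <+>\<^bsub>R\<^esub> C = A <+>\<^bsub>R\<^esub> (B <+>\<^bsub>R\<^esub> C)"
proof (intro equalityI subsetI)
  fix x assume "x \<in> (A <+>\<^bsub>R\<^esub> B) <+>\<^bsub>R\<^esub> C"
  then obtain y c where 1: "y \<in> A <+>\<^bsub>R\<^esub> B" "c \<in> C" "x = y \<oplus> c" by (rule set_add_E)
  from 1(1) obtain a b where 2: "a \<in> A" "b \<in> B" "y = a \<oplus> b" by (rule set_add_E)
  have "a \<in> carrier R" "b \<in> carrier R" "c \<in> carrier R"
    using ideal.Icarr[OF assms(1) 2(1)] ideal.Icarr[OF assms(2) 2(2)] ideal.Icarr[OF assms(3) 1(2)] .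
  then have "x = a \<oplus> (b \<oplus> c)" using 1 2 by (simp add: add.m_assoc)
  then show "x \<in> A <+>\<^bsub>R\<^esub> (B <+>\<^bsub>R\<^esub> C)" using set_add_I[OF 2(1) set_add_I[OF 2(2) 1(2)]] by simp
next
  fix x assume "x \<in> A <+>\<^bsub>R\<^esub> (B <+>\<^bsub>R\<^esub> C)"
  then obtain a y where 1: "a \<in> A" "y \<in> B <+>\<^bsub>R\<^esub> C" "x = a \<oplus> y" by (rule set_add_E)
  from 1(2) obtain b c where 2: "b \<in> B" "c \<in> C" "y = b \<oplus> c" by (rule set_add_E)
  have "a \<in> carrier R" "b \<in> carrier R" "c \<in> carrier R"
    using ideal.Icarr[OF assms(1) 1(1)] ideal.Icarr[OF assms(2) 2(1)] ideal.Icarr[OF assms(3) 2(2)] .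
  then have "x = (a \<oplus> b) \<oplus> c" using 1 2 by (simp add: add.m_assoc)
  then show "x \<in> (A <+>\<^bsub>R\<^esub> B) <+>\<^bsub>R\<^esub> C" using set_add_I[OF set_add_I[OF 1(1) 2(1)] 2(2)] by simp
qed

lemma set_add_comm_ideal:
  assumes "ideal A R" "ideal B R"
  shows "A <+>\<^bsub>R\<^esub> B = B <+>\<^bsub>R\<^esub> A"
proof -
  have *: "X <+>\<^bsub>R\<^esub> Y \<subseteq> Y <+>\<^bsub>R\<^esub> X" if "ideal X R" "ideal Y R" for X Y
  proof
    fix x assume "x \<in> X <+>\<^bsub>R\<^esub> Y"
    then obtain a b where 1: "a \<in> X" "b \<in> Y" "x = a \<oplus> b" by (rule set_add_E)
    have "a \<in> carrier R" "b \<in> carrier R" using ideal.Icarr[OF that(1) 1(1)] ideal.Icarr[OF that(2) 1(2)] .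
    then have "x = b \<oplus> a" using 1 by (simp add: add.m_comm)
    then show "x \<in> Y <+>\<^bsub>R\<^esub> X" using set_add_I[OF 1(2) 1(1)] by simp
  qed
  show ?thesis using *[OF assms] *[OF assms(2,1)] by blast
qed

lemma ideal_pow_sum_sub:
  assumes "ideal X R" "ideal Y R"
  shows "ideal_pow R (X <+>\<^bsub>R\<^esub> Y) j \<subseteq> ideal_pow R X j <+>\<^bsub>R\<^esub> Y"
proof (induct j)
  case 0 
  then show ?case using set_add_sup1[OF oneideal assms(2)] by simp
next
  case (Suc j)
  have XY: "ideal (X <+>\<^bsub>R\<^esub> Y) R" by (rule add_ideals[OF assms])
  have Xj: "ideal (ideal_pow R X j) R" by (rule ideal_pow_ideal[OF assms(1)])
  have "ideal_pow R (X <+>\<^bsub>R\<^esub> Y) (Suc j) \<subseteq> ideal_prod R (X <+>\<^bsub>R\<^esub> Y) (ideal_pow R X j <+>\<^bsub>R\<^esub> Y)"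
    using ideal_prod_mono_r[OF XY add_ideals[OF Xj assms(2)] Suc] by simp
  also have "\<dots> = ideal_prod R (X <+>\<^bsub>R\<^esub> Y) (ideal_pow R X j) <+>\<^bsub>R\<^esub> ideal_prod R (X <+>\<^bsub>R\<^esub> Y) Y"
    by (rule ideal_prod_distr(1)[OF XY Xj assms(2)])
  also have "\<dots> = (ideal_prod R X (ideal_pow R X j) <+>\<^bsub>R\<^esub> ideal_prod R Y (ideal_pow R X j)) <+>\<^bsub>R\<^esub> ideal_prod R (X <+>\<^bsub>R\<^esub> Y) Y"
    using ideal_prod_distr(2)[OF Xj assms] by simp
  also have "\<dots> \<subseteq> ideal_pow R X (Suc j) <+>\<^bsub>R\<^esub> Y"
  proof -
    have "ideal_prod R Y (ideal_pow R X j) \<subseteq> Y" using ideal_prod_inter[OF assms(2) Xj] by auto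
    moreover have "ideal_prod R (X <+>\<^bsub>R\<^esub> Y) Y \<subseteq> Y" using ideal_prod_inter[OF XY assms(2)] by auto
    ultimately have "(ideal_prod R X (ideal_pow R X j) <+>\<^bsub>R\<^esub> ideal_prod R Y (ideal_pow R X j)) <+>\<^bsub>R\<^esub> ideal_prod R (X <+>\<^bsub>R\<^esub> Y) Y
        \<subseteq> (ideal_pow R X (Suc j) <+>\<^bsub>R\<^esub> Y) <+>\<^bsub>R\<^esub> Y"
      by (intro set_add_mono) auto
    also have "\<dots> = ideal_pow R X (Suc j) <+>\<^bsub>R\<^esub> Y"
      by (simp only: set_add_assoc_ideal[OF ideal_pow_ideal[OF assms(1)] assms(2) assms(2)]
        set_add_absorb[OF assms(2) assms(2)])
    finally show ?thesis .
  qed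
  finally show ?case .
qed

end

definition is_chain :: "('a, 'b) ring_scheme \<Rightarrow> 'a set \<Rightarrow> 'a set \<Rightarrow> nat \<Rightarrow> (nat \<Rightarrow> 'a set) \<Rightarrow> bool" where
  "is_chain R B A r C \<longleftrightarrow> C 0 = B \<and> C r = A \<and> (\<forall>i\<le>r. ideal (C i) R) \<and> (\<forall>i<r. C i \<subset> C (Suc i))"

lemma module_length_alt: "module_length R B A = Sup {enat r | r. \<exists>C. is_chain R B A r C}"
  unfolding module_length_def is_chain_def by simp

lemma chain_le_length: "is_chain R B A r C \<Longrightarrow> enat r \<le> module_length R B A"
  unfolding module_length_alt by (rule Sup_upper) blast

lemma length_le: "(\<And>r C. is_chain R B A r C \<Longrightarrow> enat r \<le> K) \<Longrightarrow> module_length R B A \<le> K"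
  unfolding module_length_alt by (rule Sup_least) blast

lemma enat_le_by_finite:
  fixes x y :: enat
  assumes "\<And>k. enat k \<le> x \<Longrightarrow> enat k \<le> y"
  shows "x \<le> y"
proof (cases y)
  case (enat m)
  show ?thesis
  proof (rule ccontr)
    assume "\<not> x \<le> y"
    then have "enat (Suc m) \<le> x" using enat by (cases x) auto
    then have "enat (Suc m) \<le> y" by (rule assms)
    then show False using enat by simp
  qed
qed simp

lemma enat_le_Sup_witness:
  fixes S :: "enat set"
  assumes "enat k \<le> Sup S" "S \<noteq> {}"
  shows "\<exists>s\<in>S. enat k \<le> s"
proof (rule ccontr)
  assume "\<not> ?thesis"
  then have lt: "\<forall>s\<in>S. s < enat k" by auto
  show False
  proof (cases k)
    case 0 then show False using lt assms(2) by (auto simp: zero_enat_def[symmetric])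
  next
    case (Suc j)
    then have "\<forall>s\<in>S. s \<le> enat j" using lt by (metis Suc_ile_eq leI less_le_not_le) 
    then have "Sup S \<le> enat j" by (simp add: Sup_le_iff)
    then show False using assms(1) Suc by (metis Suc_n_not_le_n enat_ord_simps(1) order_trans)
  qed
qed

lemma chain_refl: "ideal B R \<Longrightarrow> is_chain R B B 0 (\<lambda>_. B)"
  unfolding is_chain_def by simp

lemma chain_exists:
  assumes "ideal B R" "ideal A R" "B \<subseteq> A"
  shows "\<exists>r C. is_chain R B A r C"
proof (cases "B = A")
  case True then show ?thesis using chain_refl[OF assms(1)] by blast
next
  case False
  then have "is_chain R B A 1 (\<lambda>i. if i = 0 then B else A)"
    using assms unfolding is_chain_def by (auto simp: le_Suc_eq)
  then show ?thesis by blast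
qed

lemma length_witness:
  assumes "enat k \<le> module_length R B A" "ideal B R" "ideal A R" "B \<subseteq> A"
  shows "\<exists>r C. k \<le> r \<and> is_chain R B A r C"
proof -
  have ne: "{enat r | r. \<exists>C. is_chain R B A r C} \<noteq> {}"
    using chain_exists[OF assms(2-4)] by auto
  obtain s where "s \<in> {enat r | r. \<exists>C. is_chain R B A r C}" "enat k \<le> s"
    using enat_le_Sup_witness[OF assms(1)[unfolded module_length_alt] ne] by blast
  then show ?thesis by auto
qed


lemma chain_mono:
  assumes "is_chain R B A r C" "i \<le> j" "j \<le> r"
  shows "C i \<subseteq> C j"
  using assms(2,3)
proof (induct j)
  case 0 then show ?case by simp
next
  case (Suc j)
  show ?case
  proof (cases "i = Suc j")
    case False
    then have "C i \<subseteq> C j" using Suc by simp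
    moreover have "C j \<subset> C (Suc j)" using assms(1) Suc(3) unfolding is_chain_def by simp
    ultimately show ?thesis by auto
  qed simp
qed

lemma chain_strict:
  assumes "is_chain R B A r C" "i < j" "j \<le> r"
  shows "C i \<subset> C j"
proof -
  obtain j' where j': "j = Suc j'" using assms(2) by (cases j) auto
  have "C i \<subseteq> C j'" using chain_mono[OF assms(1)] assms j' by simp
  moreover have "C j' \<subset> C (Suc j')" using assms(1,3) j' unfolding is_chain_def by simp
  ultimately show ?thesis using j' by auto
qed

lemma length_refl:
  assumes "ideal B R" shows "module_length R B B = 0"
proof -
  have "module_length R B B \<le> 0"
  proof (rule length_le)
    fix r C assume c: "is_chain R B B r C"
    show "enat r \<le> 0"
    proof (rule ccontr)
      assume "\<not> enat r \<le> 0"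
      then have "0 < r" by (simp add: zero_enat_def)
      then have "C 0 \<subset> C r" using chain_strict[OF c] by simp
      then show False using c unfolding is_chain_def by simp
    qed
  qed
  then show ?thesis by simp
qed

lemma length_pos:
  assumes "ideal B R" "ideal A R" "B \<subset> A" shows "1 \<le> module_length R B A"
proof -
  have "is_chain R B A 1 (\<lambda>i. if i = 0 then B else A)"
    using assms unfolding is_chain_def by (auto simp: le_Suc_eq)
  from chain_le_length[OF this] show ?thesis by (simp add: one_enat_def)
qed

lemma enat_add_split:
  fixes a b :: enat
  assumes "enat k \<le> a + b"
  shows "\<exists>k1 k2. k = k1 + k2 \<and> enat k1 \<le> a \<and> enat k2 \<le> b"
proof (cases a)
  case (enat p)
  show ?thesis
  proof (cases b)
    case (enat q)
    have "k \<le> p + q" using assms \<open>a = enat p\<close> enat by simp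
    then show ?thesis using \<open>a = enat p\<close> enat
      by (intro exI[of _ "min k p"] exI[of _ "k - min k p"]) auto
  next
    case infinity then show ?thesis by (intro exI[of _ 0] exI[of _ k]) (auto simp: zero_enat_def[symmetric])
  qed
next
  case infinity then show ?thesis by (intro exI[of _ k] exI[of _ 0]) (auto simp: zero_enat_def[symmetric])
qed

lemma chain_concat:
  assumes c1: "is_chain R B C r1 C1" and c2: "is_chain R C A r2 C2"
  shows "is_chain R B A (r1 + r2) (\<lambda>i. if i \<le> r1 then C1 i else C2 (i - r1))"
  unfolding is_chain_def
proof (intro conjI allI impI)
  show "(if 0 \<le> r1 then C1 0 else C2 (0 - r1)) = B" using c1 unfolding is_chain_def by simp
  show "(if r1 + r2 \<le> r1 then C1 (r1 + r2) else C2 (r1 + r2 - r1)) = A"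
    using c1 c2 unfolding is_chain_def by auto
  fix i
  show "i \<le> r1 + r2 \<Longrightarrow> ideal (if i \<le> r1 then C1 i else C2 (i - r1)) R"
    using c1 c2 unfolding is_chain_def by auto
  assume i: "i < r1 + r2"
  show "(if i \<le> r1 then C1 i else C2 (i - r1)) \<subset> (if Suc i \<le> r1 then C1 (Suc i) else C2 (Suc i - r1))"
  proof (cases "Suc i \<le> r1")
    case True then show ?thesis using c1 unfolding is_chain_def by auto
  next
    case False
    then have "i \<ge> r1" by simp
    have e: "Suc i - r1 = Suc (i - r1)" using \<open>i \<ge> r1\<close> by simp
    have "C2 (i - r1) \<subset> C2 (Suc (i - r1))" using c2 i \<open>i \<ge> r1\<close> unfolding is_chain_def by auto
    moreover have "(if i \<le> r1 then C1 i else C2 (i - r1)) = C2 (i - r1)"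
      using c1 c2 \<open>i \<ge> r1\<close> unfolding is_chain_def by auto
    ultimately show ?thesis using False e by simp
  qed
qed

lemma length_superadd:
  assumes "ideal B R" "ideal C R" "ideal A R" "B \<subseteq> C" "C \<subseteq> A"
  shows "module_length R B C + module_length R C A \<le> module_length R B A"
proof (rule enat_le_by_finite)
  fix k assume "enat k \<le> module_length R B C + module_length R C A"
  then obtain k1 k2 where k: "k = k1 + k2" "enat k1 \<le> module_length R B C" "enat k2 \<le> module_length R C A"
    using enat_add_split by blast
  obtain r1 C1 where 1: "k1 \<le> r1" "is_chain R B C r1 C1" using length_witness[OF k(2) assms(1,2,4)] by blast
  obtain r2 C2 where 2: "k2 \<le> r2" "is_chain R C A r2 C2" using length_witness[OF k(3) assms(2,3,5)] by blast
  have "enat (r1 + r2) \<le> module_length R B A" by (rule chain_le_length[OF chain_concat[OF 1(2) 2(2)]])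
  then show "enat k \<le> module_length R B A" using k 1 2 by (meson add_mono enat_ord_simps(1) order_trans)
qed

lemma weak_chain:
  assumes "\<forall>i\<le>t. ideal (E i) R" "\<forall>i<t. E i \<subseteq> E (Suc i)"
  shows "\<exists>C. is_chain R (E 0) (E t) (card {i. i < t \<and> E i \<noteq> E (Suc i)}) C"
  using assms
proof (induct t)
  case 0 then show ?case using chain_refl[of "E 0" R] by auto
next
  case (Suc t)
  obtain C where C: "is_chain R (E 0) (E t) (card {i. i < t \<and> E i \<noteq> E (Suc i)}) C"
    using Suc by auto
  let ?k = "card {i. i < t \<and> E i \<noteq> E (Suc i)}"
  show ?case
  proof (cases "E t = E (Suc t)")
    case True
    have "{i. i < Suc t \<and> E i \<noteq> E (Suc i)} = {i. i < t \<and> E i \<noteq> E (Suc i)}"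
      using True less_Suc_eq by auto
    then show ?thesis using C True by auto
  next
    case False
    have eq: "{i. i < Suc t \<and> E i \<noteq> E (Suc i)} = insert t {i. i < t \<and> E i \<noteq> E (Suc i)}"
      using False less_Suc_eq by auto
    have cardeq: "card {i. i < Suc t \<and> E i \<noteq> E (Suc i)} = Suc ?k"
      unfolding eq by (subst card_insert_disjoint) auto
    have "is_chain R (E 0) (E (Suc t)) (Suc ?k) (C(Suc ?k := E (Suc t)))"
      unfolding is_chain_def
    proof (intro conjI allI impI)
      show "(C(Suc ?k := E (Suc t))) 0 = E 0" using C unfolding is_chain_def by simp
      show "(C(Suc ?k := E (Suc t))) (Suc ?k) = E (Suc t)" by simp
      fix i
      show "i \<le> Suc ?k \<Longrightarrow> ideal ((C(Suc ?k := E (Suc t))) i) R"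
        using C Suc(2) unfolding is_chain_def by (auto simp: le_Suc_eq)
      assume i: "i < Suc ?k"
      show "(C(Suc ?k := E (Suc t))) i \<subset> (C(Suc ?k := E (Suc t))) (Suc i)"
      proof (cases "i = ?k")
        case True
        then show ?thesis using C Suc(3) False unfolding is_chain_def by auto
      next
        case False
        then have "i < ?k" using i by simp
        then show ?thesis using C unfolding is_chain_def by auto
      qed
    qed
    then show ?thesis using cardeq by metis
  qed
qed

lemma weak_chain_length:
  assumes "\<forall>i\<le>t. ideal (E i) R" "\<forall>i<t. E i \<subseteq> E (Suc i)"
  shows "enat (card {i. i < t \<and> E i \<noteq> E (Suc i)}) \<le> module_length R (E 0) (E t)"
  using weak_chain[OF assms] chain_le_length by blast


context cring
begin

lemma modular_eq:
  assumes "ideal X R" "ideal Y R" "ideal C R" "X \<subseteq> Y"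
    and "X \<inter> C = Y \<inter> C" "X <+>\<^bsub>R\<^esub> C = Y <+>\<^bsub>R\<^esub> C"
  shows "X = Y"
proof (intro equalityI subsetI)
  fix x assume "x \<in> X" then show "x \<in> Y" using assms(4) by blast
next
  fix y assume y: "y \<in> Y"
  then have "y \<in> Y <+>\<^bsub>R\<^esub> C" using set_add_sup1[OF assms(2,3)] by blast
  then have "y \<in> X <+>\<^bsub>R\<^esub> C" using assms(6) by simp
  then obtain x c where xc: "x \<in> X" "c \<in> C" "y = x \<oplus> c" by (rule set_add_E)
  have xc_car: "x \<in> carrier R" "c \<in> carrier R" using ideal.Icarr[OF assms(1) xc(1)] ideal.Icarr[OF assms(3) xc(2)] .
  have "c = \<ominus> x \<oplus> y" using xc xc_car by (simp add: a_assoc[symmetric] l_neg)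
  moreover have "\<ominus> x \<in> Y" using xc(1) assms(4) additive_subgroup.a_inv_closed[OF ideal.axioms(1)[OF assms(2)]] by blast
  ultimately have "c \<in> Y" using y additive_subgroup.a_closed[OF ideal.axioms(1)[OF assms(2)]] by simp
  then have "c \<in> X" using xc(2) assms(5) by blast
  then show "y \<in> X" using xc additive_subgroup.a_closed[OF ideal.axioms(1)[OF assms(1)]] by simp
qed

lemma length_subadd:
  assumes "ideal B R" "ideal C R" "ideal A R" "B \<subseteq> C" "C \<subseteq> A"
  shows "module_length R B A \<le> module_length R B C + module_length R C A"
proof (rule length_le)
  fix r D assume D: "is_chain R B A r D"
  define E1 where "E1 i = D i \<inter> C" for i
  define E2 where "E2 i = D i <+>\<^bsub>R\<^esub> C" for i
  have Di: "\<forall>i\<le>r. ideal (D i) R" using D unfolding is_chain_def by simp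
  have Dm: "\<forall>i<r. D i \<subseteq> D (Suc i)" using D unfolding is_chain_def by auto
  have D0: "D 0 = B" and Dr: "D r = A" using D unfolding is_chain_def by auto
  have E1i: "\<forall>i\<le>r. ideal (E1 i) R" unfolding E1_def using Di i_intersect[OF _ assms(2)] by simp
  have E2i: "\<forall>i\<le>r. ideal (E2 i) R" unfolding E2_def using Di add_ideals[OF _ assms(2)] by simp
  have E1m: "\<forall>i<r. E1 i \<subseteq> E1 (Suc i)"
  proof (intro allI impI)
    fix i assume "i < r" then have "D i \<subseteq> D (Suc i)" using Dm by simp
    then show "E1 i \<subseteq> E1 (Suc i)" unfolding E1_def by (rule Int_mono) simp
  qed
  have E2m: "\<forall>i<r. E2 i \<subseteq> E2 (Suc i)"
  proof (intro allI impI)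
    fix i assume "i < r" then have "D i \<subseteq> D (Suc i)" using Dm by simp
    then show "E2 i \<subseteq> E2 (Suc i)" unfolding E2_def by (rule set_add_mono) simp
  qed
  have E10: "E1 0 = B" using D0 assms(4) unfolding E1_def by auto
  have E1r: "E1 r = C" using Dr assms(5) unfolding E1_def by auto
  have E20: "E2 0 = C" using D0 set_add_absorb2[OF assms(1,2,4)] unfolding E2_def by auto
  have E2r: "E2 r = A" using Dr set_add_absorb[OF assms(3,2,5)] unfolding E2_def by auto
  let ?S1 = "{i. i < r \<and> E1 i \<noteq> E1 (Suc i)}"
  let ?S2 = "{i. i < r \<and> E2 i \<noteq> E2 (Suc i)}"
  have 1: "enat (card ?S1) \<le> module_length R B C" using weak_chain_length[OF E1i E1m] E10 E1r by simp
  have 2: "enat (card ?S2) \<le> module_length R C A" using weak_chain_length[OF E2i E2m] E20 E2r by simp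
  have "{..<r} \<subseteq> ?S1 \<union> ?S2"
  proof
    fix i assume i: "i \<in> {..<r}"
    show "i \<in> ?S1 \<union> ?S2"
    proof (rule ccontr)
      assume "i \<notin> ?S1 \<union> ?S2"
      then have "E1 i = E1 (Suc i)" "E2 i = E2 (Suc i)" using i by auto
      moreover have "ideal (D i) R" "ideal (D (Suc i)) R" "D i \<subseteq> D (Suc i)" using Di Dm i by auto
      ultimately have "D i = D (Suc i)"
        using modular_eq[of "D i" "D (Suc i)" C] assms(2) unfolding E1_def E2_def by blast
      then show False using D i unfolding is_chain_def by auto
    qed
  qed
  moreover have "finite (?S1 \<union> ?S2)" by simp
  ultimately have "card {..<r} \<le> card (?S1 \<union> ?S2)" by (intro card_mono)
  then have "r \<le> card (?S1 \<union> ?S2)" by simp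
  also have "\<dots> \<le> card ?S1 + card ?S2" by (rule card_Un_le)
  finally have "enat r \<le> enat (card ?S1) + enat (card ?S2)" by simp
  also have "\<dots> \<le> module_length R B C + module_length R C A" using 1 2 by (rule add_mono)
  finally show "enat r \<le> module_length R B C + module_length R C A" .
qed

lemma length_add:
  assumes "ideal B R" "ideal C R" "ideal A R" "B \<subseteq> C" "C \<subseteq> A"
  shows "module_length R B A = module_length R B C + module_length R C A"
  using length_subadd[OF assms] length_superadd[OF assms] by simp

lemma length_le_one:
  assumes "ideal B R" "ideal A R" "B \<subseteq> A"
    and cover: "\<And>X. ideal X R \<Longrightarrow> B \<subseteq> X \<Longrightarrow> X \<subseteq> A \<Longrightarrow> X = B \<or> X = A"
  shows "module_length R B A \<le> 1"
proof (rule length_le)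
  fix r C assume c: "is_chain R B A r C"
  show "enat r \<le> 1"
  proof (rule ccontr)
    assume "\<not> enat r \<le> 1"
    then have r: "2 \<le> r" by (simp add: one_enat_def)
    have "C 0 \<subset> C 1" "C 1 \<subset> C r" using chain_strict[OF c] r by auto
    moreover have "ideal (C 1) R" using c r unfolding is_chain_def by auto
    ultimately show False using cover[of "C 1"] c unfolding is_chain_def by auto
  qed
qed

lemma length_one_cover:
  assumes "module_length R B A = 1" "ideal B R" "ideal A R" "ideal X R" "B \<subset> X" "X \<subset> A"
  shows False
proof -
  have "is_chain R B A 2 (\<lambda>i. if i = 0 then B else if i = 1 then X else A)"
    using assms unfolding is_chain_def by (auto simp: numeral_2_eq_2 le_Suc_eq less_Suc_eq)
  from chain_le_length[OF this] assms(1) show False by (simp add: one_enat_def)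
qed

lemma length_sum:
  assumes "\<forall>i\<le>t. ideal (X i) R" "\<forall>i<t. X (Suc i) \<subseteq> X i"
  shows "X t \<subseteq> X 0 \<and> module_length R (X t) (X 0) = (\<Sum>i<t. module_length R (X (Suc i)) (X i))"
  using assms
proof (induct t)
  case 0 then show ?case using length_refl by auto
next
  case (Suc t)
  then have IH: "X t \<subseteq> X 0" "module_length R (X t) (X 0) = (\<Sum>i<t. module_length R (X (Suc i)) (X i))" by auto
  have "module_length R (X (Suc t)) (X 0) = module_length R (X (Suc t)) (X t) + module_length R (X t) (X 0)"
    using Suc(2,3) IH(1) by (intro length_add) auto
  then show ?case using IH Suc(3) by (auto simp: add.commute)
qed

end


locale locr = cring +
  fixes m
  assumes m_ideal: "ideal m R"
    and m_proper: "\<one> \<notin> m"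
    and m_units: "\<And>x. x \<in> carrier R \<Longrightarrow> x \<notin> m \<Longrightarrow> x \<in> Units R"
begin

lemma m_carr: "x \<in> m \<Longrightarrow> x \<in> carrier R"
  using ideal.Icarr[OF m_ideal] .

lemma PIdl_mem: "p \<in> PIdl g \<Longrightarrow> \<exists>r\<in>carrier R. p = r \<otimes> g"
  unfolding cgenideal_def by blast

lemma cover_gen:
  assumes B: "ideal B R" and g: "g \<in> carrier R" and h: "\<And>x. x \<in> m \<Longrightarrow> x \<otimes> g \<in> B"
  shows "module_length R B (PIdl g <+>\<^bsub>R\<^esub> B) \<le> 1"
proof (rule length_le_one)
  have Pg: "ideal (PIdl g) R" by (rule cgenideal_ideal[OF g])
  show "ideal B R" by fact
  show "ideal (PIdl g <+>\<^bsub>R\<^esub> B) R" by (rule add_ideals[OF Pg B])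
  show "B \<subseteq> PIdl g <+>\<^bsub>R\<^esub> B" by (rule set_add_sup2[OF Pg B])
  fix X assume X: "ideal X R" "B \<subseteq> X" "X \<subseteq> PIdl g <+>\<^bsub>R\<^esub> B"
  show "X = B \<or> X = PIdl g <+>\<^bsub>R\<^esub> B"
  proof (rule disjCI)
    assume "X \<noteq> PIdl g <+>\<^bsub>R\<^esub> B"
    show "X = B"
    proof (rule ccontr)
      assume "X \<noteq> B"
      then obtain x where x: "x \<in> X" "x \<notin> B" using X(2) by blast
      then have "x \<in> PIdl g <+>\<^bsub>R\<^esub> B" using X(3) by blast
      then obtain p b where pb: "p \<in> PIdl g" "b \<in> B" "x = p \<oplus> b" by (rule set_add_E)
      obtain r where r: "r \<in> carrier R" "p = r \<otimes> g" using PIdl_mem[OF pb(1)] by blast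
      have bc: "b \<in> carrier R" using ideal.Icarr[OF B pb(2)] .
      have pc: "p \<in> carrier R" using r g by simp
      show False
      proof (cases "r \<in> m")
        case True
        then have "p \<in> B" using h r by simp
        then have "x \<in> B" using pb additive_subgroup.a_closed[OF ideal.axioms(1)[OF B]] by simp
        then show False using x by simp
      next
        case False
        then have u: "r \<in> Units R" using m_units r by simp
        have "p = x \<oplus> \<ominus> b" using pb pc bc by (simp add: a_assoc r_neg)
        moreover have "\<ominus> b \<in> X" using X(2) pb(2) additive_subgroup.a_inv_closed[OF ideal.axioms(1)[OF X(1)]] by blast
        ultimately have pX: "p \<in> X" using x(1) additive_subgroup.a_closed[OF ideal.axioms(1)[OF X(1)]] by simp
        have "g = inv r \<otimes> p" using r g u by (simp add: m_assoc[symmetric] Units_l_inv)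
        then have "g \<in> X" using ideal.I_l_closed[OF X(1) pX] u by simp
        then have "PIdl g \<subseteq> X" using cgenideal_minimal[OF X(1)] by simp
        then have "PIdl g <+>\<^bsub>R\<^esub> B \<subseteq> X" using set_add_sub_ideal[OF X(1)] X(2) by simp
        then show False using X(3) \<open>X \<noteq> PIdl g <+>\<^bsub>R\<^esub> B\<close> by simp
      qed
    qed
  qed
qed

lemma Idl_insert:
  assumes "g \<in> carrier R" "G \<subseteq> carrier R"
  shows "Idl (insert g G) = PIdl g <+>\<^bsub>R\<^esub> Idl G"
proof
  have Pg: "ideal (PIdl g) R" by (rule cgenideal_ideal[OF assms(1)])
  have IG: "ideal (Idl G) R" by (rule genideal_ideal[OF assms(2)])
  have S: "ideal (PIdl g <+>\<^bsub>R\<^esub> Idl G) R" by (rule add_ideals[OF Pg IG])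
  show "Idl (insert g G) \<subseteq> PIdl g <+>\<^bsub>R\<^esub> Idl G"
  proof (rule genideal_minimal[OF S])
    have "g \<in> PIdl g" by (rule cgenideal_self[OF assms(1)])
    moreover have "G \<subseteq> Idl G" by (rule genideal_self[OF assms(2)])
    ultimately show "insert g G \<subseteq> PIdl g <+>\<^bsub>R\<^esub> Idl G"
      using set_add_sup1[OF Pg IG] set_add_sup2[OF Pg IG] by blast
  qed
  have gG: "insert g G \<subseteq> carrier R" using assms by simp
  have II: "ideal (Idl (insert g G)) R" by (rule genideal_ideal[OF gG])
  have "g \<in> Idl (insert g G)" using genideal_self[OF gG] by blast
  then have "PIdl g \<subseteq> Idl (insert g G)" by (rule cgenideal_minimal[OF II])
  moreover have "Idl G \<subseteq> Idl (insert g G)"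
    using genideal_minimal[OF II] genideal_self[OF gG] by blast
  ultimately show "PIdl g <+>\<^bsub>R\<^esub> Idl G \<subseteq> Idl (insert g G)"
    by (rule set_add_sub_ideal[OF II])
qed

lemma Idl_empty_sub: "ideal B R \<Longrightarrow> Idl {} \<subseteq> B"
  by (rule genideal_minimal) auto

lemma gen_length:
  assumes "finite G" "G \<subseteq> carrier R" "ideal B R" "\<And>g x. g \<in> G \<Longrightarrow> x \<in> m \<Longrightarrow> x \<otimes> g \<in> B"
  shows "module_length R B (Idl G <+>\<^bsub>R\<^esub> B) \<le> enat (card G)"
  using assms
proof (induct G arbitrary: B rule: finite_induct)
  case empty
  have "ideal (Idl {}) R" by (rule genideal_ideal) simp
  then have "Idl {} <+>\<^bsub>R\<^esub> B = B" using set_add_absorb2 Idl_empty_sub empty by blast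
  then show ?case using length_refl[OF empty(2)] by simp
next
  case (insert g G)
  have gc: "g \<in> carrier R" and Gc: "G \<subseteq> carrier R" using insert by auto
  have Pg: "ideal (PIdl g) R" by (rule cgenideal_ideal[OF gc])
  have IG: "ideal (Idl G) R" by (rule genideal_ideal[OF Gc])
  define B' where "B' = PIdl g <+>\<^bsub>R\<^esub> B"
  have B': "ideal B' R" unfolding B'_def by (rule add_ideals[OF Pg insert(5)])
  have BB': "B \<subseteq> B'" unfolding B'_def by (rule set_add_sup2[OF Pg insert(5)])
  have eq: "Idl (insert g G) <+>\<^bsub>R\<^esub> B = Idl G <+>\<^bsub>R\<^esub> B'"
    unfolding Idl_insert[OF gc Gc] B'_def
    using set_add_assoc_ideal[OF Pg IG insert(5)] set_add_assoc_ideal[OF IG Pg insert(5)]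
      set_add_comm_ideal[OF Pg IG] by simp
  have S: "ideal (Idl G <+>\<^bsub>R\<^esub> B') R" by (rule add_ideals[OF IG B'])
  have B'S: "B' \<subseteq> Idl G <+>\<^bsub>R\<^esub> B'" by (rule set_add_sup2[OF IG B'])
  have "module_length R B (Idl G <+>\<^bsub>R\<^esub> B') = module_length R B B' + module_length R B' (Idl G <+>\<^bsub>R\<^esub> B')"
    by (rule length_add[OF insert(5) B' S BB' B'S])
  also have "module_length R B B' \<le> 1"
    unfolding B'_def by (rule cover_gen[OF insert(5) gc]) (use insert(6) in simp)
  also have "module_length R B' (Idl G <+>\<^bsub>R\<^esub> B') \<le> enat (card G)"
    by (rule insert(3)[OF Gc B']) (use insert(6) BB' in blast)
  finally have "module_length R B (Idl G <+>\<^bsub>R\<^esub> B') \<le> 1 + enat (card G)" by - (simp add: add_right_mono)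
  then show ?case using eq insert(1,2) by (simp add: one_enat_def)
qed

lemma prod_PIdl:
  assumes a: "a \<in> carrier R" and z: "z \<in> ideal_prod R m (PIdl a)"
  shows "\<exists>x\<in>m. z = x \<otimes> a"
  using z
proof (induct z rule: ideal_prod.induct)
  case (prod i j)
  obtain r where r: "r \<in> carrier R" "j = r \<otimes> a" using PIdl_mem[OF prod(2)] by blast
  have "i \<otimes> j = (i \<otimes> r) \<otimes> a" using r a m_carr[OF prod(1)] by (simp add: m_assoc)
  moreover have "i \<otimes> r \<in> m" using ideal.I_r_closed[OF m_ideal prod(1) r(1)] .
  ultimately show ?case by blast
next
  case (sum s1 s2)
  then obtain x1 x2 where "x1 \<in> m" "s1 = x1 \<otimes> a" "x2 \<in> m" "s2 = x2 \<otimes> a" by blast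
  moreover then have "s1 \<oplus> s2 = (x1 \<oplus> x2) \<otimes> a" using a m_carr by (simp add: l_distr)
  moreover have "x1 \<oplus> x2 \<in> m" using calculation additive_subgroup.a_closed[OF ideal.axioms(1)[OF m_ideal]] by simp
  ultimately show ?case by blast
qed

lemma unit_cancel_into:
  assumes K: "ideal K R" and a: "a \<in> carrier R" and x: "x \<in> m" and k: "a \<ominus> x \<otimes> a \<in> K"
  shows "a \<in> K"
proof -
  have xc: "x \<in> carrier R" using m_carr[OF x] .
  have "\<one> \<ominus> x \<notin> m"
  proof
    assume "\<one> \<ominus> x \<in> m"
    then have "(\<one> \<ominus> x) \<oplus> x \<in> m" using x additive_subgroup.a_closed[OF ideal.axioms(1)[OF m_ideal]] by simp
    moreover have "(\<one> \<ominus> x) \<oplus> x = \<one>" using xc by (simp add: a_minus_def a_assoc l_neg)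
    ultimately show False using m_proper by simp
  qed
  then have u: "\<one> \<ominus> x \<in> Units R" using m_units xc by simp
  have "(\<one> \<ominus> x) \<otimes> a = a \<ominus> x \<otimes> a" using xc a by (simp add: a_minus_def l_distr l_minus)
  then have "(\<one> \<ominus> x) \<otimes> a \<in> K" using k by simp
  then have "inv (\<one> \<ominus> x) \<otimes> ((\<one> \<ominus> x) \<otimes> a) \<in> K" using ideal.I_l_closed[OF K] u by simp
  moreover have "inv (\<one> \<ominus> x) \<otimes> ((\<one> \<ominus> x) \<otimes> a) = a"
  proof -
    define u where "u = \<one> \<ominus> x"
    have "u \<in> Units R" using u unfolding u_def .
    moreover have "u \<in> carrier R" "inv u \<in> carrier R" using Units_closed Units_inv_closed calculation by auto
    ultimately have "inv u \<otimes> (u \<otimes> a) = a" using a by (simp add: m_assoc[symmetric] Units_l_inv)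
    then show ?thesis unfolding u_def .
  qed
  ultimately show ?thesis by simp
qed

lemma nakayama_gen:
  assumes "finite A" "A \<subseteq> carrier R" "ideal K R"
    "K <+>\<^bsub>R\<^esub> Idl A \<subseteq> K <+>\<^bsub>R\<^esub> ideal_prod R m (K <+>\<^bsub>R\<^esub> Idl A)"
  shows "K <+>\<^bsub>R\<^esub> Idl A = K"
  using assms
proof (induct A arbitrary: K rule: finite_induct)
  case empty
  have "ideal (Idl {}) R" by (rule genideal_ideal) simp
  then show ?case using set_add_absorb[OF empty(2)] Idl_empty_sub[OF empty(2)] by blast
next
  case (insert a A)
  have ac: "a \<in> carrier R" and Ac: "A \<subseteq> carrier R" using insert by auto
  have K: "ideal K R" by fact
  have Pa: "ideal (PIdl a) R" by (rule cgenideal_ideal[OF ac])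
  have IA: "ideal (Idl A) R" by (rule genideal_ideal[OF Ac])
  define K' where "K' = K <+>\<^bsub>R\<^esub> PIdl a"
  have K': "ideal K' R" unfolding K'_def by (rule add_ideals[OF K Pa])
  have KK': "K \<subseteq> K'" unfolding K'_def by (rule set_add_sup1[OF K Pa])
  have eqM: "K <+>\<^bsub>R\<^esub> Idl (insert a A) = K' <+>\<^bsub>R\<^esub> Idl A"
    unfolding Idl_insert[OF ac Ac] K'_def using set_add_assoc_ideal[OF K Pa IA] by simp
  have M: "ideal (K' <+>\<^bsub>R\<^esub> Idl A) R" by (rule add_ideals[OF K' IA])
  have "K' <+>\<^bsub>R\<^esub> Idl A \<subseteq> K <+>\<^bsub>R\<^esub> ideal_prod R m (K' <+>\<^bsub>R\<^esub> Idl A)"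
    using insert(6) eqM by simp
  also have "\<dots> \<subseteq> K' <+>\<^bsub>R\<^esub> ideal_prod R m (K' <+>\<^bsub>R\<^esub> Idl A)"
    by (rule set_add_mono[OF KK']) simp
  finally have MK': "K' <+>\<^bsub>R\<^esub> Idl A = K'" by (rule insert(3)[OF Ac K'])
  have "a \<in> PIdl a" by (rule cgenideal_self[OF ac])
  then have "a \<in> K'" using set_add_sup2[OF K Pa] unfolding K'_def by blast
  then have "a \<in> K <+>\<^bsub>R\<^esub> ideal_prod R m K'" using insert(6) eqM MK' by auto
  then obtain k z where kz: "k \<in> K" "z \<in> ideal_prod R m K'" "a = k \<oplus> z" by (rule set_add_E)
  have "ideal_prod R m K' = ideal_prod R m K <+>\<^bsub>R\<^esub> ideal_prod R m (PIdl a)"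
    unfolding K'_def by (rule ideal_prod_distr(1)[OF m_ideal K Pa])
  then obtain z1 z2 where z: "z1 \<in> ideal_prod R m K" "z2 \<in> ideal_prod R m (PIdl a)" "z = z1 \<oplus> z2"
    using kz(2) by (auto elim: set_add_E)
  obtain x where x: "x \<in> m" "z2 = x \<otimes> a" using prod_PIdl[OF ac z(2)] by blast
  have z1K: "z1 \<in> K" using z(1) ideal_prod_inter[OF m_ideal K] by blast
  have kc: "k \<in> carrier R" and z1c: "z1 \<in> carrier R" using ideal.Icarr[OF K] kz z1K by auto
  have xac: "x \<otimes> a \<in> carrier R" using m_carr[OF x(1)] ac by simp
  have "a \<ominus> x \<otimes> a = k \<oplus> z1"
  proof -
    define w where "w = x \<otimes> a"
    have e: "a = k \<oplus> (z1 \<oplus> w)" using kz(3) z(3) x(2) unfolding w_def by simp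
    have wc: "w \<in> carrier R" using xac unfolding w_def .
    have "a \<ominus> w = k \<oplus> z1" unfolding e using kc z1c wc by (simp add: a_minus_def a_assoc r_neg)
    then show ?thesis unfolding w_def .
  qed
  moreover have "k \<oplus> z1 \<in> K" using kz(1) z1K additive_subgroup.a_closed[OF ideal.axioms(1)[OF K]] by simp
  ultimately have "a \<in> K" using unit_cancel_into[OF K ac x(1)] by simp
  then have "PIdl a \<subseteq> K" by (rule cgenideal_minimal[OF K])
  then have "K' = K" unfolding K'_def by (rule set_add_absorb[OF K Pa])
  then show ?case using eqM MK' by simp
qed

lemma nakayama:
  assumes "finite A" "A \<subseteq> carrier R" "Idl A \<subseteq> ideal_prod R m (Idl A)"
  shows "Idl A = {\<zero>}"
proof -
  have IA: "ideal (Idl A) R" by (rule genideal_ideal[OF assms(2)])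
  have Z: "ideal {\<zero>} R" by (rule zeroideal)
  have zs: "{\<zero>} \<subseteq> Idl A" using additive_subgroup.zero_closed[OF ideal.axioms(1)[OF IA]] by simp
  have zs2: "{\<zero>} \<subseteq> ideal_prod R m (Idl A)"
    using additive_subgroup.zero_closed[OF ideal.axioms(1)[OF ideal_prod_is_ideal[OF m_ideal IA]]] by simp
  have e1: "{\<zero>} <+>\<^bsub>R\<^esub> Idl A = Idl A" by (rule set_add_absorb2[OF Z IA zs])
  have e2: "{\<zero>} <+>\<^bsub>R\<^esub> ideal_prod R m (Idl A) = ideal_prod R m (Idl A)"
    by (rule set_add_absorb2[OF Z ideal_prod_is_ideal[OF m_ideal IA] zs2])
  have "{\<zero>} <+>\<^bsub>R\<^esub> Idl A = {\<zero>}"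
    by (rule nakayama_gen[OF assms(1,2) Z]) (use assms(3) e1 e2 in simp)
  then show ?thesis using e1 by simp
qed

end


context locr
begin

abbreviation P where "P k \<equiv> ideal_pow R m k"

lemma P_ideal: "ideal (P k) R" by (rule ideal_pow_ideal[OF m_ideal])

lemma P_Suc: "P (Suc k) = ideal_prod R m (P k)" by simp

lemma P_Suc_sub: "P (Suc k) \<subseteq> P k" by (rule ideal_pow_Suc_sub[OF m_ideal])

lemma P_anti: "k \<le> j \<Longrightarrow> P j \<subseteq> P k" by (rule ideal_pow_antimono[OF m_ideal])

lemma P_zero_mem: "\<zero> \<in> P k"
  using additive_subgroup.zero_closed[OF ideal.axioms(1)[OF P_ideal]] .

lemma P_carr: "x \<in> P k \<Longrightarrow> x \<in> carrier R" using ideal.Icarr[OF P_ideal] .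

lemma P_mult: "x \<in> m \<Longrightarrow> f \<in> P k \<Longrightarrow> x \<otimes> f \<in> P (Suc k)"
  using ideal_prod.prod[of x m f "P k" R] by simp

lemma P_mult': "x \<in> m \<Longrightarrow> f \<in> P k \<Longrightarrow> f \<otimes> x \<in> P (Suc k)"
  using P_mult m_comm m_carr P_carr by metis

lemma P_zero_beyond:
  assumes N: "P N = {\<zero>}" and "N \<le> k" shows "P k = {\<zero>}"
  using P_anti[OF assms(2)] N P_zero_mem by blast

lemma P_strict:
  assumes N: "P N = {\<zero>}" and nz: "P k \<noteq> {\<zero>}"
  shows "P (Suc k) \<noteq> P k"
proof
  assume eq: "P (Suc k) = P k"
  have "P (k + j) = P k" for j
  proof (induct j)
    case 0 then show ?case by simp
  next
    case (Suc j)
    have "P (k + Suc j) = ideal_prod R m (P (k + j))" by simp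
    also have "\<dots> = ideal_prod R m (P k)" using Suc by simp
    also have "\<dots> = P k" using eq by simp
    finally show ?case .
  qed
  then have "P k = P (k + N)" by simp
  also have "\<dots> = {\<zero>}" by (rule P_zero_beyond[OF N]) simp
  finally show False using nz by simp
qed

lemma PIdl_zero: "PIdl \<zero> = {\<zero>}"
  unfolding cgenideal_def by (auto intro!: exI[of _ "\<zero>"])

lemma set_add_left_absorb:
  assumes "ideal A R" "ideal Q R"
  shows "A <+>\<^bsub>R\<^esub> (A <+>\<^bsub>R\<^esub> Q) = A <+>\<^bsub>R\<^esub> Q"
  using set_add_assoc_ideal[OF assms(1) assms(1) assms(2)] set_add_absorb[OF assms(1) assms(1)] by simp

lemma P_principal_of_length_one:
  assumes N: "P N = {\<zero>}" and len: "module_length R (P (Suc k)) (P k) = 1"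
  shows "\<exists>a\<in>carrier R. P k = PIdl a"
proof -
  have ne: "P (Suc k) \<noteq> P k"
  proof
    assume "P (Suc k) = P k"
    then have "module_length R (P (Suc k)) (P k) = 0" using length_refl[OF P_ideal] by simp
    then show False using len by simp
  qed
  then obtain a where a: "a \<in> P k" "a \<notin> P (Suc k)" using P_Suc_sub by blast
  have ac: "a \<in> carrier R" using P_carr[OF a(1)] .
  have Pa: "ideal (PIdl a) R" by (rule cgenideal_ideal[OF ac])
  have PaK: "PIdl a \<subseteq> P k" by (rule cgenideal_minimal[OF P_ideal a(1)])
  define X where "X = PIdl a <+>\<^bsub>R\<^esub> P (Suc k)"
  have X: "ideal X R" unfolding X_def by (rule add_ideals[OF Pa P_ideal])
  have X1: "P (Suc k) \<subseteq> X" unfolding X_def by (rule set_add_sup2[OF Pa P_ideal])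
  have X2: "X \<subseteq> P k" unfolding X_def by (rule set_add_sub_ideal[OF P_ideal PaK P_Suc_sub])
  have aX: "a \<in> X" using cgenideal_self[OF ac] set_add_sup1[OF Pa P_ideal] unfolding X_def by blast
  have XK: "X = P k"
  proof (rule ccontr)
    assume "X \<noteq> P k"
    then show False
      using length_one_cover[OF len P_ideal P_ideal X] X1 X2 aX a(2) by blast
  qed
  have step: "P k \<subseteq> PIdl a <+>\<^bsub>R\<^esub> P (Suc k + t)" for t
  proof (induct t)
    case 0 then show ?case using XK X_def by simp
  next
    case (Suc t)
    have "P (Suc k) = ideal_prod R m (P k)" by simp
    also have "\<dots> \<subseteq> ideal_prod R m (PIdl a <+>\<^bsub>R\<^esub> P (Suc k + t))"
      by (rule ideal_prod_mono_r[OF m_ideal add_ideals[OF Pa P_ideal] Suc])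
    also have "\<dots> = ideal_prod R m (PIdl a) <+>\<^bsub>R\<^esub> ideal_prod R m (P (Suc k + t))"
      by (rule ideal_prod_distr(1)[OF m_ideal Pa P_ideal])
    also have "\<dots> \<subseteq> PIdl a <+>\<^bsub>R\<^esub> P (Suc k + Suc t)"
      using ideal_prod_inter[OF m_ideal Pa] by (intro set_add_mono) auto
    finally have 1: "P (Suc k) \<subseteq> PIdl a <+>\<^bsub>R\<^esub> P (Suc k + Suc t)" .
    have "P k = PIdl a <+>\<^bsub>R\<^esub> P (Suc k)" using XK X_def by simp
    also have "\<dots> \<subseteq> PIdl a <+>\<^bsub>R\<^esub> (PIdl a <+>\<^bsub>R\<^esub> P (Suc k + Suc t))"
      by (rule set_add_mono[OF _ 1]) simp
    also have "\<dots> = PIdl a <+>\<^bsub>R\<^esub> P (Suc k + Suc t)"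
      by (rule set_add_left_absorb[OF Pa P_ideal])
    finally show ?case .
  qed
  have "P (Suc k + N) = {\<zero>}" by (rule P_zero_beyond[OF N]) simp
  then have "P k \<subseteq> PIdl a <+>\<^bsub>R\<^esub> {\<zero>}" using step[of N] by simp
  also have "\<dots> = PIdl a" 
    using set_add_absorb[OF Pa zeroideal] additive_subgroup.zero_closed[OF ideal.axioms(1)[OF Pa]] by simp
  finally show ?thesis using PaK ac by blast
qed

lemma solve_add:
  assumes "U \<oplus> V = W \<oplus> Z" "U \<in> carrier R" "V \<in> carrier R" "W \<in> carrier R" "Z \<in> carrier R"
  shows "U = W \<oplus> (Z \<oplus> \<ominus> V)"
proof -
  have "U = (U \<oplus> V) \<oplus> \<ominus> V" using assms(2,3) by (simp add: a_assoc r_neg)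
  also have "\<dots> = W \<oplus> (Z \<oplus> \<ominus> V)" using assms by (simp add: a_assoc)
  finally show ?thesis .
qed

declare ideal_pow.simps(2)[simp del]

lemma macaulay_step:
  assumes b: "b \<in> carrier R" and dec: "P (Suc j) = PIdl b <+>\<^bsub>R\<^esub> P (Suc (Suc j))"
  shows "\<exists>b'\<in>carrier R. P (Suc (Suc j)) = PIdl b' <+>\<^bsub>R\<^esub> P (Suc (Suc (Suc j)))"
proof -
  define A where "A = P j"
  define A1 where "A1 = P (Suc j)"
  define A2 where "A2 = P (Suc (Suc j))"
  define A3 where "A3 = P (Suc (Suc (Suc j)))"
  have iA: "ideal A R" "ideal A1 R" "ideal A2 R" "ideal A3 R" unfolding A_def A1_def A2_def A3_def by (rule P_ideal)+
  have Pb: "ideal (PIdl b) R" by (rule cgenideal_ideal[OF b])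
  have mPb: "ideal (ideal_prod R m (PIdl b)) R" by (rule ideal_prod_is_ideal[OF m_ideal Pb])
  have dec': "A1 = PIdl b <+>\<^bsub>R\<^esub> A2" using dec unfolding A1_def A2_def .
  have bA1: "b \<in> A1" using cgenideal_self[OF b] set_add_sup1[OF Pb iA(3)] dec' by blast
  have A1m: "A1 = ideal_prod R m A" unfolding A1_def A_def by (rule P_Suc)
  have A2m: "A2 = ideal_prod R m A1" unfolding A1_def A2_def by (rule P_Suc)
  have A3m: "A3 = ideal_prod R m A2" unfolding A3_def A2_def by (rule P_Suc)
  have mult1: "\<And>x f. x \<in> m \<Longrightarrow> f \<in> A \<Longrightarrow> f \<otimes> x \<in> A1" unfolding A_def A1_def by (rule P_mult')
  have mult2: "\<And>x f. x \<in> m \<Longrightarrow> f \<in> A1 \<Longrightarrow> f \<otimes> x \<in> A2" unfolding A2_def A1_def by (rule P_mult')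
  have mult2': "\<And>x f. x \<in> m \<Longrightarrow> f \<in> A1 \<Longrightarrow> x \<otimes> f \<in> A2" unfolding A2_def A1_def by (rule P_mult)
  have mult3: "\<And>x f. x \<in> m \<Longrightarrow> f \<in> A2 \<Longrightarrow> f \<otimes> x \<in> A3" unfolding A3_def A2_def by (rule P_mult')
  have mult3': "\<And>x f. x \<in> m \<Longrightarrow> f \<in> A2 \<Longrightarrow> x \<otimes> f \<in> A3" unfolding A3_def A2_def by (rule P_mult)
  have eq2: "A2 = ideal_prod R m (PIdl b) <+>\<^bsub>R\<^esub> A3"
  proof -
    have "A2 = ideal_prod R m (PIdl b <+>\<^bsub>R\<^esub> A2)" using A2m dec' by simp
    also have "\<dots> = ideal_prod R m (PIdl b) <+>\<^bsub>R\<^esub> ideal_prod R m A2"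
      by (rule ideal_prod_distr(1)[OF m_ideal Pb iA(3)])
    finally show ?thesis using A3m by simp
  qed
  have A32: "A3 \<subseteq> A2" unfolding A3_def A2_def by (rule P_Suc_sub)
  show ?thesis
  proof (cases "ideal_prod R m (PIdl b) \<subseteq> A3")
    case True
    then have "A2 = A3" using eq2 set_add_absorb2[OF mPb iA(4)] by simp
    moreover have "PIdl \<zero> <+>\<^bsub>R\<^esub> A3 = A3"
      unfolding PIdl_zero using set_add_absorb2[OF zeroideal iA(4)] additive_subgroup.zero_closed[OF ideal.axioms(1)[OF iA(4)]] by simp
    ultimately show ?thesis unfolding A2_def A3_def by (intro bexI[of _ "\<zero>"]) auto
  next
    case False
    then obtain z where z: "z \<in> ideal_prod R m (PIdl b)" "z \<notin> A3" by blast
    obtain x0 where x0: "x0 \<in> m" "z = x0 \<otimes> b" using prod_PIdl[OF b z(1)] by blast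
    have x0c: "x0 \<in> carrier R" using m_carr[OF x0(1)] .
    define b' where "b' = x0 \<otimes> b"
    have b'c: "b' \<in> carrier R" unfolding b'_def using x0c b by simp
    have Pb': "ideal (PIdl b') R" by (rule cgenideal_ideal[OF b'c])
    have S: "ideal (PIdl b' <+>\<^bsub>R\<^esub> A3) R" by (rule add_ideals[OF Pb' iA(4)])
    have claim: "y \<otimes> b \<in> PIdl b' <+>\<^bsub>R\<^esub> A3" if y: "y \<in> m" for y
    proof (rule ccontr)
      assume nin: "y \<otimes> b \<notin> PIdl b' <+>\<^bsub>R\<^esub> A3"
      have yc: "y \<in> carrier R" using m_carr[OF y] .
      have key: "f \<otimes> x0 \<in> A2" if f: "f \<in> A" for f
      proof -
        have fc: "f \<in> carrier R" using ideal.Icarr[OF iA(1) f] .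
        have "f \<otimes> x0 \<in> PIdl b <+>\<^bsub>R\<^esub> A2" using mult1[OF x0(1) f] dec' by simp
        then obtain p t where pt: "p \<in> PIdl b" "t \<in> A2" "f \<otimes> x0 = p \<oplus> t" by (rule set_add_E)
        obtain c where c: "c \<in> carrier R" "p = c \<otimes> b" using PIdl_mem[OF pt(1)] by blast
        have "f \<otimes> y \<in> PIdl b <+>\<^bsub>R\<^esub> A2" using mult1[OF y f] dec' by simp
        then obtain p' t' where pt': "p' \<in> PIdl b" "t' \<in> A2" "f \<otimes> y = p' \<oplus> t'" by (rule set_add_E)
        obtain c' where c': "c' \<in> carrier R" "p' = c' \<otimes> b" using PIdl_mem[OF pt'(1)] by blast
        have tc: "t \<in> carrier R" "t' \<in> carrier R" using ideal.Icarr[OF iA(3)] pt(2) pt'(2) by auto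
        show ?thesis
        proof (cases "c \<in> m")
          case True
          have "c \<otimes> b \<in> A2" by (rule mult2'[OF True bA1])
          then show ?thesis using pt c additive_subgroup.a_closed[OF ideal.axioms(1)[OF iA(3)]] by simp
        next
          case False
          then have cu: "c \<in> Units R" using m_units c(1) by simp
          have cinv: "inv c \<in> carrier R" using Units_inv_closed[OF cu] .
          have "(f \<otimes> x0) \<otimes> y = (f \<otimes> y) \<otimes> x0" using fc x0c yc by (simp add: m_assoc m_comm m_lcomm)
          then have "(c \<otimes> b \<oplus> t) \<otimes> y = (c' \<otimes> b \<oplus> t') \<otimes> x0" using pt(3) pt'(3) c(2) c'(2) by simp
          moreover have "(c \<otimes> b \<oplus> t) \<otimes> y = c \<otimes> (y \<otimes> b) \<oplus> t \<otimes> y"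
            using c(1) b tc yc by (simp add: l_distr r_distr m_assoc m_comm m_lcomm)
          moreover have "(c' \<otimes> b \<oplus> t') \<otimes> x0 = c' \<otimes> b' \<oplus> t' \<otimes> x0"
            unfolding b'_def using c'(1) b tc x0c by (simp add: l_distr r_distr m_assoc m_comm m_lcomm)
          ultimately have e: "c \<otimes> (y \<otimes> b) \<oplus> t \<otimes> y = c' \<otimes> b' \<oplus> t' \<otimes> x0" by simp
          have e2: "c \<otimes> (y \<otimes> b) = c' \<otimes> b' \<oplus> (t' \<otimes> x0 \<oplus> \<ominus> (t \<otimes> y))"
            by (rule solve_add[OF e]) (use c(1) c'(1) b b'c tc yc x0c in simp_all)
          have inA3: "t' \<otimes> x0 \<oplus> \<ominus> (t \<otimes> y) \<in> A3"
          proof -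
            have "t' \<otimes> x0 \<in> A3" by (rule mult3[OF x0(1) pt'(2)])
            moreover have "t \<otimes> y \<in> A3" by (rule mult3[OF y pt(2)])
            ultimately show ?thesis
              using additive_subgroup.a_closed[OF ideal.axioms(1)[OF iA(4)]]
                additive_subgroup.a_inv_closed[OF ideal.axioms(1)[OF iA(4)]] by simp
          qed
          have ybc: "y \<otimes> b \<in> carrier R" using yc b by simp
          have "y \<otimes> b = inv c \<otimes> (c \<otimes> (y \<otimes> b))"
            using cu cinv ybc c(1) by (simp add: m_assoc[symmetric] Units_l_inv)
          also have "\<dots> = (inv c \<otimes> c') \<otimes> b' \<oplus> inv c \<otimes> (t' \<otimes> x0 \<oplus> \<ominus> (t \<otimes> y))"
            unfolding e2 using cinv c'(1) b'c tc x0c yc by (simp add: r_distr m_assoc)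
          finally have "y \<otimes> b = (inv c \<otimes> c') \<otimes> b' \<oplus> inv c \<otimes> (t' \<otimes> x0 \<oplus> \<ominus> (t \<otimes> y))" .
          moreover have "(inv c \<otimes> c') \<otimes> b' \<in> PIdl b'" unfolding cgenideal_def using cinv c'(1) by blast
          moreover have "inv c \<otimes> (t' \<otimes> x0 \<oplus> \<ominus> (t \<otimes> y)) \<in> A3" by (rule ideal.I_l_closed[OF iA(4) inA3 cinv])
          ultimately have "y \<otimes> b \<in> PIdl b' <+>\<^bsub>R\<^esub> A3" using set_add_I by metis
          then show ?thesis using nin by simp
        qed
      qed
      have key2: "u \<otimes> x0 \<in> A3" if u: "u \<in> A1" for u
        using u[unfolded A1m]
      proof (induct u rule: ideal_prod.induct)
        case (prod p q)
        have pc: "p \<in> carrier R" using m_carr[OF prod(1)] .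
        have qc: "q \<in> carrier R" using ideal.Icarr[OF iA(1) prod(2)] .
        have "(p \<otimes> q) \<otimes> x0 = p \<otimes> (q \<otimes> x0)" using pc qc x0c by (simp add: m_assoc)
        then show ?case using mult3'[OF prod(1) key[OF prod(2)]] by simp
      next
        case (sum s1 s2)
        have "s1 \<in> carrier R" "s2 \<in> carrier R"
          using sum(1,3) ideal.Icarr[OF iA(2)] A1m by auto
        then have "(s1 \<oplus> s2) \<otimes> x0 = s1 \<otimes> x0 \<oplus> s2 \<otimes> x0" using x0c by (simp add: l_distr)
        then show ?case using sum(2,4) additive_subgroup.a_closed[OF ideal.axioms(1)[OF iA(4)]] by simp
      qed
      have "b \<otimes> x0 \<in> A3" by (rule key2[OF bA1])
      moreover have "b \<otimes> x0 = z" using x0(2) b x0c by (simp add: m_comm)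
      ultimately show False using z(2) by simp
    qed
    have "A2 \<subseteq> (PIdl b' <+>\<^bsub>R\<^esub> A3) <+>\<^bsub>R\<^esub> A3"
    proof -
      have "ideal_prod R m (PIdl b) \<subseteq> PIdl b' <+>\<^bsub>R\<^esub> A3"
      proof
        fix w assume "w \<in> ideal_prod R m (PIdl b)"
        then obtain y where "y \<in> m" "w = y \<otimes> b" using prod_PIdl[OF b] by blast
        then show "w \<in> PIdl b' <+>\<^bsub>R\<^esub> A3" using claim by simp
      qed
      then show ?thesis using eq2 set_add_mono by blast
    qed
    also have "\<dots> = PIdl b' <+>\<^bsub>R\<^esub> A3"
      using set_add_assoc_ideal[OF Pb' iA(4) iA(4)] set_add_absorb[OF iA(4) iA(4)] by simp
    finally have sub1: "A2 \<subseteq> PIdl b' <+>\<^bsub>R\<^esub> A3" .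
    have "b' \<in> A2" using z(1) x0(2) eq2 set_add_sup1[OF mPb iA(4)] unfolding b'_def by blast
    then have "PIdl b' \<subseteq> A2" by (rule cgenideal_minimal[OF iA(3)])
    then have "PIdl b' <+>\<^bsub>R\<^esub> A3 \<subseteq> A2" using set_add_sub_ideal[OF iA(3)] A32 by simp
    then show ?thesis using sub1 b'c unfolding A2_def A3_def by blast
  qed
qed

end


context locr
begin

lemma principal_propagates:
  assumes N: "P N = {\<zero>}" and v1: "1 \<le> v" and a: "a \<in> carrier R" and Pv: "P v = PIdl a"
  shows "\<exists>b\<in>carrier R. P (v + d) = PIdl b <+>\<^bsub>R\<^esub> P (Suc (v + d))"
proof (induct d)
  case 0
  have Pa: "ideal (PIdl a) R" by (rule cgenideal_ideal[OF a])
  have "P (Suc v) \<subseteq> PIdl a" using P_Suc_sub Pv by blast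
  then have "PIdl a <+>\<^bsub>R\<^esub> P (Suc v) = PIdl a" by (rule set_add_absorb[OF Pa P_ideal])
  then show ?case using a Pv by auto
next
  case (Suc d)
  then obtain b where b: "b \<in> carrier R" "P (v + d) = PIdl b <+>\<^bsub>R\<^esub> P (Suc (v + d))" by blast
  obtain j where j: "v + d = Suc j" using v1 by (cases "v + d") auto
  have "\<exists>b'\<in>carrier R. P (Suc (Suc j)) = PIdl b' <+>\<^bsub>R\<^esub> P (Suc (Suc (Suc j)))"
    by (rule macaulay_step[OF b(1)]) (use b(2) j in simp)
  then show ?case using j by simp
qed

lemma cover_P:
  assumes b: "b \<in> carrier R" and dec: "P i = PIdl b <+>\<^bsub>R\<^esub> P (Suc i)"
  shows "module_length R (P (Suc i)) (P i) \<le> 1"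
proof -
  have Pb: "ideal (PIdl b) R" by (rule cgenideal_ideal[OF b])
  have bi: "b \<in> P i" using cgenideal_self[OF b] set_add_sup1[OF Pb P_ideal] dec by blast
  have "module_length R (P (Suc i)) (PIdl b <+>\<^bsub>R\<^esub> P (Suc i)) \<le> 1"
    by (rule cover_gen[OF P_ideal b]) (rule P_mult[OF _ bi])
  then show ?thesis using dec by simp
qed

lemma length_P_pos:
  assumes N: "P N = {\<zero>}" and nz: "P i \<noteq> {\<zero>}"
  shows "1 \<le> module_length R (P (Suc i)) (P i)"
  using length_pos[OF P_ideal P_ideal] P_strict[OF N nz] P_Suc_sub by blast

lemma Idl_empty_zero: "Idl {} = {\<zero>}"
  using Idl_empty_sub[OF zeroideal] additive_subgroup.zero_closed[OF ideal.axioms(1)[OF genideal_ideal[of "{}"]]]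
  by auto

lemma min_gens_one_iff:
  assumes M: "ideal M R" and fg: "\<exists>G. finite G \<and> G \<subseteq> M \<and> Idl G = M"
  shows "min_gens R M = 1 \<longleftrightarrow> (\<exists>a\<in>carrier R. M = PIdl a) \<and> M \<noteq> {\<zero>}"
proof
  let ?Q = "\<lambda>r. \<exists>G. finite G \<and> card G = r \<and> G \<subseteq> M \<and> Idl G = M"
  assume "min_gens R M = 1"
  then have L: "(LEAST r. ?Q r) = 1" unfolding min_gens_def .
  have ex: "\<exists>r. ?Q r" using fg by blast
  have "?Q (LEAST r. ?Q r)" by (rule LeastI_ex[OF ex])
  then obtain G where G: "finite G" "card G = 1" "G \<subseteq> M" "Idl G = M" using L by auto
  then obtain a where "G = {a}" using card_1_singletonE by blast
  then have a: "a \<in> carrier R" "M = Idl {a}" using G ideal.Icarr[OF M] by auto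
  have "M = PIdl a" using a cgenideal_eq_genideal by simp
  moreover have "M \<noteq> {\<zero>}"
  proof
    assume "M = {\<zero>}"
    then have "finite {}" "card {} = 0" "{} \<subseteq> M" "Idl {} = M" using Idl_empty_zero by auto
    then have "?Q 0" by blast
    then have "(LEAST r. ?Q r) = 0" by (rule Least_eq_0)
    then show False using L by simp
  qed
  ultimately show "(\<exists>a\<in>carrier R. M = PIdl a) \<and> M \<noteq> {\<zero>}" using a by blast
next
  let ?Q = "\<lambda>r. \<exists>G. finite G \<and> card G = r \<and> G \<subseteq> M \<and> Idl G = M"
  assume "(\<exists>a\<in>carrier R. M = PIdl a) \<and> M \<noteq> {\<zero>}"
  then obtain a where a: "a \<in> carrier R" "M = PIdl a" "M \<noteq> {\<zero>}" by blast
  have "finite {a}" "card {a} = 1" "{a} \<subseteq> M" "Idl {a} = M"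
    using a cgenideal_self[OF a(1)] cgenideal_eq_genideal[OF a(1)] by auto
  then have Q1: "?Q 1" by blast
  have nQ0: "\<not> ?Q 0"
  proof
    assume "?Q 0"
    then obtain G where "finite G" "card G = 0" "Idl G = M" by blast
    then have "G = {}" "Idl G = M" by auto
    then show False using Idl_empty_zero a(3) by simp
  qed
  have "(LEAST r. ?Q r) = 1"
  proof (rule Least_equality)
    show "?Q 1" by (rule Q1)
  next
    fix y assume "?Q y" then show "1 \<le> y" using nQ0 by (cases y) auto
  qed
  then show "min_gens R M = 1" unfolding min_gens_def .
qed

lemma carrier_nonzero: "carrier R \<noteq> {\<zero>}"
proof
  assume "carrier R = {\<zero>}"
  then have "\<one> = \<zero>" using one_closed by blast
  then show False using m_proper additive_subgroup.zero_closed[OF ideal.axioms(1)[OF m_ideal]] by simp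
qed

lemma socle_props:
  assumes N: "P N = {\<zero>}"
  shows "P (socle_degree R m) \<noteq> {\<zero>}" "P (Suc (socle_degree R m)) = {\<zero>}"
    "\<And>k. P k \<noteq> {\<zero>} \<Longrightarrow> k \<le> socle_degree R m"
proof -
  let ?Q = "\<lambda>s. P s \<noteq> {\<zero>}"
  have Q0: "?Q 0" using carrier_nonzero by simp
  have bd: "\<forall>y. ?Q y \<longrightarrow> y \<le> N"
  proof (intro allI impI)
    fix y assume "?Q y"
    then show "y \<le> N" using P_zero_beyond[OF N, of y] by (cases "N \<le> y") auto
  qed
  have sd: "socle_degree R m = (GREATEST s. ?Q s)" unfolding socle_degree_def by simp
  show 1: "P (socle_degree R m) \<noteq> {\<zero>}" unfolding sd by (rule GreatestI_nat[where k=0 and b=N]) (use Q0 bd in auto)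
  show 3: "\<And>k. P k \<noteq> {\<zero>} \<Longrightarrow> k \<le> socle_degree R m" unfolding sd
    by (rule Greatest_le_nat[where b=N]) (use bd in auto)
  show "P (Suc (socle_degree R m)) = {\<zero>}"
    using 3[of "Suc (socle_degree R m)"] by (cases "P (Suc (socle_degree R m)) = {\<zero>}") auto
qed

lemma sum_ge_card_enat:
  fixes h :: "nat \<Rightarrow> enat"
  assumes "finite A" "\<forall>i\<in>A. 1 \<le> h i"
  shows "enat (card A) \<le> sum h A"
proof -
  have "(\<Sum>i\<in>A. (1::enat)) \<le> sum h A" using assms(2) by (intro sum_mono) auto
  moreover have "(\<Sum>i\<in>A. (1::enat)) = enat (card A)" by (simp add: of_nat_eq_enat)
  ultimately show ?thesis by simp
qed

lemma sum_eq_card_enat_iff: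
  fixes h :: "nat \<Rightarrow> enat"
  assumes "finite A" "\<forall>i\<in>A. 1 \<le> h i"
  shows "sum h A = enat (card A) \<longleftrightarrow> (\<forall>i\<in>A. h i = 1)"
proof
  assume all: "\<forall>i\<in>A. h i = 1"
  then have "sum h A = (\<Sum>i\<in>A. (1::enat))" by (intro sum.cong) auto
  then show "sum h A = enat (card A)" by (simp add: of_nat_eq_enat)
next
  assume eq: "sum h A = enat (card A)"
  show "\<forall>i\<in>A. h i = 1"
  proof (rule ccontr)
    assume "\<not> (\<forall>i\<in>A. h i = 1)"
    then obtain j where j: "j \<in> A" "h j \<noteq> 1" by blast
    have hj: "2 \<le> h j"
    proof (cases "h j")
      case (enat k)
      then have "1 \<le> k" "k \<noteq> 1" using assms(2) j by (auto simp: one_enat_def)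
      then show ?thesis using enat by (simp add: numeral_eq_enat)
    qed simp
    have "sum h A = h j + sum h (A - {j})" using sum.remove[OF assms(1) j(1)] .
    moreover have "enat (card (A - {j})) \<le> sum h (A - {j})"
      using assms by (intro sum_ge_card_enat) auto
    ultimately have le: "2 + enat (card (A - {j})) \<le> sum h A" using hj by (simp add: add_mono)
    have "card (A - {j}) = card A - 1" using card_Diff_singleton[OF j(1)] .
    moreover have "card A \<ge> 1" using j(1) assms(1) card_0_eq[OF assms(1)] by (cases "card A") auto
    ultimately have "card A = card (A - {j}) + 1" by simp
    then have "2 + enat (card (A - {j})) \<le> enat (card (A - {j}) + 1)" using le eq by simp
    then show False by (simp add: numeral_eq_enat)
  qed
qed

end


context locr
begin

lemma abstract_main:
  fixes hS :: "nat \<Rightarrow> enat" and v :: nat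
  defines "s \<equiv> socle_degree R m"
  defines "L \<equiv> module_length R {\<zero>} (carrier R)"
  assumes N: "P N = {\<zero>}" and v1: "1 \<le> v" and vs: "v \<le> Suc s"
    and fin: "L \<noteq> \<infinity>"
    and hS: "\<forall>i<v. hilbert_fun R m i = hS i"
    and fg: "\<exists>G. finite G \<and> G \<subseteq> P v \<and> Idl G = P v"
  shows "enat s + (\<Sum>i<v. hS i) + 1 \<le> L + enat v \<and>
    (v \<le> s \<longrightarrow>
      ((enat s + (\<Sum>i<v. hS i) + 1 = L + enat v) \<longleftrightarrow> min_gens R (P v) = 1)
      \<and> (min_gens R (P v) = 1 \<longleftrightarrow>
          ((\<forall>i<v. hilbert_fun R m i = hS i)
           \<and> (\<forall>i. v \<le> i \<and> i \<le> s \<longrightarrow> hilbert_fun R m i = 1)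
           \<and> (\<forall>i>s. hilbert_fun R m i = 0))))"
proof -
  define h where "h i = module_length R (P (Suc i)) (P i)" for i
  have hh: "hilbert_fun R m i = h i" for i unfolding hilbert_fun_def h_def by simp
  have Ps: "P s \<noteq> {\<zero>}" "P (Suc s) = {\<zero>}" "\<And>k. P k \<noteq> {\<zero>} \<Longrightarrow> k \<le> s"
    using socle_props[OF N] unfolding s_def by auto
  have Lsum: "L = (\<Sum>i<Suc s. h i)"
    using length_sum[of "Suc s" P] P_ideal P_Suc_sub Ps(2) unfolding L_def h_def by simp
  define T where "T = (\<Sum>i\<in>{v..<Suc s}. h i)"
  have split: "(\<Sum>i<Suc s. h i) = (\<Sum>i<v. h i) + T"
    unfolding T_def using sum.atLeastLessThan_concat[of 0 v "Suc s" h] vs by (simp add: atLeast0LessThan)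
  have hSv: "(\<Sum>i<v. h i) = (\<Sum>i<v. hS i)" using hS hh by (intro sum.cong) auto
  have Ldec: "L = (\<Sum>i<v. hS i) + T" using Lsum split hSv by simp
  have nz: "P i \<noteq> {\<zero>}" if "i \<le> s" for i using P_anti[OF that] Ps(1) P_zero_mem by blast
  have hpos: "\<forall>i\<in>{v..<Suc s}. 1 \<le> h i" unfolding h_def using length_P_pos[OF N nz] by auto
  have cardA: "card {v..<Suc s} = Suc s - v" by simp
  have Tge: "enat (Suc s - v) \<le> T" unfolding T_def using sum_ge_card_enat[OF _ hpos] cardA by simp
  have TE: "T = enat (Suc s - v) \<longleftrightarrow> (\<forall>i. v \<le> i \<and> i \<le> s \<longrightarrow> h i = 1)"
    unfolding T_def using sum_eq_card_enat_iff[OF _ hpos] cardA by auto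
  obtain x where x: "(\<Sum>i<v. hS i) = enat x" using fin Ldec by (cases "(\<Sum>i<v. hS i)") auto
  obtain t where t: "T = enat t" using fin Ldec by (cases T) auto
  have tge: "Suc s - v \<le> t" using Tge t by simp
  have part1: "enat s + (\<Sum>i<v. hS i) + 1 \<le> L + enat v"
    unfolding Ldec x t using tge vs by (simp add: one_enat_def)
  have part2: "(enat s + (\<Sum>i<v. hS i) + 1 = L + enat v) \<longleftrightarrow> min_gens R (P v) = 1"
    and part3: "min_gens R (P v) = 1 \<longleftrightarrow>
          ((\<forall>i<v. hilbert_fun R m i = hS i)
           \<and> (\<forall>i. v \<le> i \<and> i \<le> s \<longrightarrow> hilbert_fun R m i = 1)
           \<and> (\<forall>i>s. hilbert_fun R m i = 0))" if vs': "v \<le> s"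
  proof -
    have eqE: "(enat s + (\<Sum>i<v. hS i) + 1 = L + enat v) \<longleftrightarrow> (\<forall>i. v \<le> i \<and> i \<le> s \<longrightarrow> h i = 1)"
    proof -
      have "(enat s + (\<Sum>i<v. hS i) + 1 = L + enat v) \<longleftrightarrow> s + x + 1 = x + t + v"
        unfolding Ldec x t by (simp add: one_enat_def)
      also have "\<dots> \<longleftrightarrow> t = Suc s - v" using vs' by auto
      also have "\<dots> \<longleftrightarrow> T = enat (Suc s - v)" using t by simp
      finally show ?thesis using TE by simp
    qed
    have mgE: "min_gens R (P v) = 1 \<longleftrightarrow> (\<forall>i. v \<le> i \<and> i \<le> s \<longrightarrow> h i = 1)"
    proof
      assume "min_gens R (P v) = 1"
      then obtain a where a: "a \<in> carrier R" "P v = PIdl a"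
        using min_gens_one_iff[OF P_ideal fg] by blast
      show "\<forall>i. v \<le> i \<and> i \<le> s \<longrightarrow> h i = 1"
      proof (intro allI impI)
        fix i assume i: "v \<le> i \<and> i \<le> s"
        then obtain d where d: "i = v + d" using le_Suc_ex by blast
        obtain b where b: "b \<in> carrier R" "P i = PIdl b <+>\<^bsub>R\<^esub> P (Suc i)"
          using principal_propagates[OF N v1 a, of d] d by auto
        have "h i \<le> 1" unfolding h_def by (rule cover_P[OF b])
        moreover have "1 \<le> h i" unfolding h_def by (rule length_P_pos[OF N nz]) (use i in simp)
        ultimately show "h i = 1" by simp
      qed
    next
      assume all: "\<forall>i. v \<le> i \<and> i \<le> s \<longrightarrow> h i = 1"
      then have "h v = 1" using vs' by simp
      then obtain a where a: "a \<in> carrier R" "P v = PIdl a"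
        using P_principal_of_length_one[OF N] unfolding h_def by blast
      moreover have "P v \<noteq> {\<zero>}" by (rule nz[OF vs'])
      ultimately show "min_gens R (P v) = 1" using min_gens_one_iff[OF P_ideal fg] by blast
    qed
    have h0: "\<forall>i>s. h i = 0"
    proof (intro allI impI)
      fix i assume "s < i"
      then have "P i = {\<zero>}" "P (Suc i) = {\<zero>}" using P_zero_beyond[OF Ps(2)] by auto
      then show "h i = 0" unfolding h_def using length_refl[OF zeroideal] by simp
    qed
    show "(enat s + (\<Sum>i<v. hS i) + 1 = L + enat v) \<longleftrightarrow> min_gens R (P v) = 1"
      using eqE mgE by simp
    show "min_gens R (P v) = 1 \<longleftrightarrow>
          ((\<forall>i<v. hilbert_fun R m i = hS i)
           \<and> (\<forall>i. v \<le> i \<and> i \<le> s \<longrightarrow> hilbert_fun R m i = 1)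
           \<and> (\<forall>i>s. hilbert_fun R m i = 0))"
      using mgE h0 hS unfolding hh by auto
  qed
  show ?thesis using part1 part2 part3 by blast
qed

lemma finite_length:
  assumes N: "P N = {\<zero>}" and fg: "\<And>k. \<exists>G. finite G \<and> G \<subseteq> P k \<and> Idl G = P k"
  shows "module_length R {\<zero>} (carrier R) \<noteq> \<infinity>"
proof -
  have hfin: "module_length R (P (Suc i)) (P i) \<noteq> \<infinity>" for i
  proof -
    obtain G where G: "finite G" "G \<subseteq> P i" "Idl G = P i" using fg by blast
    have Gc: "G \<subseteq> carrier R" using G(2) P_carr by blast
    have "Idl G <+>\<^bsub>R\<^esub> P (Suc i) = P i"
      using set_add_absorb[OF P_ideal P_ideal P_Suc_sub] G(3) by simp
    moreover have "module_length R (P (Suc i)) (Idl G <+>\<^bsub>R\<^esub> P (Suc i)) \<le> enat (card G)"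
      by (rule gen_length[OF G(1) Gc P_ideal]) (use G(2) P_mult in blast)
    ultimately show ?thesis by (metis enat_ord_simps(4) infinity_ileE) 
  qed
  have "module_length R (P N) (P 0) = (\<Sum>i<N. module_length R (P (Suc i)) (P i))"
    using length_sum[of N P] P_ideal P_Suc_sub by simp
  moreover have "(\<Sum>i<N. module_length R (P (Suc i)) (P i)) \<noteq> \<infinity>"
  proof (induct N)
    case (Suc N) then show ?case using hfin by (simp add: plus_eq_infty_iff_enat)
  qed (simp add: zero_enat_def)
  ultimately show ?thesis using N by (simp add: ideal_pow.simps(1))
qed

end


context cring
begin

lemma exists_maximal:
  assumes noeth: "noetherian_ring R" and J: "ideal J R" "\<one> \<notin> J"
  shows "\<exists>M. maximalideal M R \<and> J \<subseteq> M"
proof -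
  define A where "A = {K. ideal K R \<and> J \<subseteq> K \<and> \<one> \<notin> K}"
  have "\<exists>M\<in>A. \<forall>X\<in>A. M \<subseteq> X \<longrightarrow> X = M"
  proof (rule subset_Zorn)
    fix C assume C: "subset.chain A C"
    show "\<exists>U\<in>A. \<forall>X\<in>C. X \<subseteq> U"
    proof (cases "C = {}")
      case True then show ?thesis using J unfolding A_def by auto
    next
      case False
      have CA: "C \<subseteq> A" using C unfolding subset_chain_def by simp
      have "subset.chain {I. ideal I R} C"
        using C unfolding subset_chain_def A_def by auto
      then have "\<Union>C \<in> C" using noetherian_ring.ideal_chain_is_trivial[OF noeth False] by simp
      then show ?thesis using CA by blast
    qed
  qed
  then obtain M where M: "M \<in> A" "\<And>X. X \<in> A \<Longrightarrow> M \<subseteq> X \<Longrightarrow> X = M" by blast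
  have "maximalideal M R"
  proof (rule maximalidealI)
    show "ideal M R" using M(1) unfolding A_def by simp
    show "carrier R \<noteq> M" using M(1) unfolding A_def by auto
    fix J' assume J': "ideal J' R" "M \<subseteq> J'" "J' \<subseteq> carrier R"
    show "J' = M \<or> J' = carrier R"
    proof (cases "\<one> \<in> J'")
      case True then show ?thesis using ideal.one_imp_carrier[OF J'(1)] by simp
    next
      case False
      then have "J' \<in> A" using J' M(1) unfolding A_def by auto
      then show ?thesis using M(2) J'(2) by simp
    qed
  qed
  then show ?thesis using M(1) unfolding A_def by auto
qed

lemma local_units:
  assumes noeth: "noetherian_ring R" and n: "maximalideal n R"
    and uniq: "\<forall>J. maximalideal J R \<longrightarrow> J = n"
    and x: "x \<in> carrier R" "x \<notin> n"
  shows "x \<in> Units R"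
proof (rule ccontr)
  assume nu: "x \<notin> Units R"
  have Px: "ideal (PIdl x) R" by (rule cgenideal_ideal[OF x(1)])
  have "\<one> \<notin> PIdl x"
  proof
    assume "\<one> \<in> PIdl x"
    then obtain y where y: "y \<in> carrier R" "\<one> = y \<otimes> x" unfolding cgenideal_def by blast
    then have "x \<otimes> y = \<one>" using x(1) by (simp add: m_comm)
    then have "x \<in> Units R" using y x(1) unfolding Units_def by auto
    then show False using nu by simp
  qed
  then obtain M where M: "maximalideal M R" "PIdl x \<subseteq> M" using exists_maximal[OF noeth Px] by blast
  then have "M = n" using uniq by simp
  then show False using M(2) cgenideal_self[OF x(1)] x(2) by blast
qed

lemma PIdl_prod_sub:
  assumes a: "a \<in> carrier R" and b: "b \<in> carrier R"
  shows "ideal_prod R (PIdl a) (PIdl b) \<subseteq> PIdl (a \<otimes> b)"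
proof
  fix z assume "z \<in> ideal_prod R (PIdl a) (PIdl b)"
  then show "z \<in> PIdl (a \<otimes> b)"
  proof (induct z rule: ideal_prod.induct)
    case (prod i j)
    obtain r where r: "r \<in> carrier R" "i = r \<otimes> a" using prod(1) unfolding cgenideal_def by blast
    obtain r' where r': "r' \<in> carrier R" "j = r' \<otimes> b" using prod(2) unfolding cgenideal_def by blast
    have "i \<otimes> j = (r \<otimes> r') \<otimes> (a \<otimes> b)" using r r' a b by (simp add: m_assoc m_comm m_lcomm)
    then show ?case unfolding cgenideal_def using r r' by blast
  next
    case (sum s1 s2)
    then show ?case using additive_subgroup.a_closed[OF ideal.axioms(1)[OF cgenideal_ideal]] a b by simp
  qed
qed

lemma PIdl_pow_sub:
  assumes a: "a \<in> carrier R"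
  shows "ideal_pow R (PIdl a) k \<subseteq> PIdl (a [^] k)"
proof (induct k)
  case 0
  show ?case unfolding cgenideal_def by (auto intro!: exI) 
next
  case (Suc k)
  have Pa: "ideal (PIdl a) R" by (rule cgenideal_ideal[OF a])
  have "ideal_pow R (PIdl a) (Suc k) = ideal_prod R (PIdl a) (ideal_pow R (PIdl a) k)"
    by (simp add: ideal_pow.simps(2))
  also have "\<dots> \<subseteq> ideal_prod R (PIdl a) (PIdl (a [^] k))"
    by (rule ideal_prod_mono_r[OF Pa cgenideal_ideal Suc]) (simp add: a)
  also have "\<dots> \<subseteq> PIdl (a \<otimes> a [^] k)" by (rule PIdl_prod_sub) (simp_all add: a)
  also have "a \<otimes> a [^] k = a [^] Suc k" using a by (simp add: nat_pow_Suc m_comm)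
  finally show ?case .
qed

end

context locr
begin

lemma rad_pow:
  assumes "finite G" "G \<subseteq> carrier R" "ideal K R" "\<forall>g\<in>G. \<exists>k::nat. g [^] k \<in> K"
  shows "\<exists>N. ideal_pow R (Idl G) N \<subseteq> K"
  using assms
proof (induct G rule: finite_induct)
  case empty
  have I0: "ideal (Idl {}) R" by (rule genideal_ideal) simp
  have "ideal_pow R (Idl {}) 1 = Idl {}" by (rule ideal_pow_one[OF I0])
  then show ?case using Idl_empty_sub[OF empty(2)] by metis
next
  case (insert g G)
  have gc: "g \<in> carrier R" and Gc: "G \<subseteq> carrier R" using insert by auto
  have K: "ideal K R" by fact
  obtain q where q: "ideal_pow R (Idl G) q \<subseteq> K" using insert(3)[OF Gc K] insert(6) by blast
  obtain p :: nat where p: "g [^] p \<in> K" using insert(6) by blast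
  define X where "X = PIdl g"
  define Y where "Y = Idl G"
  have X: "ideal X R" unfolding X_def by (rule cgenideal_ideal[OF gc])
  have Y: "ideal Y R" unfolding Y_def by (rule genideal_ideal[OF Gc])
  have XY: "ideal (X <+>\<^bsub>R\<^esub> Y) R" by (rule add_ideals[OF X Y])
  have Xp: "ideal_pow R X p \<subseteq> K"
    using PIdl_pow_sub[OF gc, of p] cgenideal_minimal[OF K p] unfolding X_def by blast
  have YK: "ideal (Y <+>\<^bsub>R\<^esub> K) R" by (rule add_ideals[OF Y K])
  have "ideal_pow R (X <+>\<^bsub>R\<^esub> Y) p \<subseteq> ideal_pow R X p <+>\<^bsub>R\<^esub> Y"
    by (rule ideal_pow_sum_sub[OF X Y])
  also have "\<dots> \<subseteq> K <+>\<^bsub>R\<^esub> Y" by (rule set_add_mono[OF Xp]) simp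
  also have "\<dots> = Y <+>\<^bsub>R\<^esub> K" by (rule set_add_comm_ideal[OF K Y])
  finally have 1: "ideal_pow R (X <+>\<^bsub>R\<^esub> Y) p \<subseteq> Y <+>\<^bsub>R\<^esub> K" .
  have "ideal_pow R (X <+>\<^bsub>R\<^esub> Y) (p * q) = ideal_pow R (ideal_pow R (X <+>\<^bsub>R\<^esub> Y) p) q"
    by (rule ideal_pow_mult[OF XY])
  also have "\<dots> \<subseteq> ideal_pow R (Y <+>\<^bsub>R\<^esub> K) q"
    by (rule ideal_pow_mono_base[OF ideal_pow_ideal[OF XY] YK 1])
  also have "\<dots> \<subseteq> ideal_pow R Y q <+>\<^bsub>R\<^esub> K" by (rule ideal_pow_sum_sub[OF Y K])
  also have "\<dots> \<subseteq> K" by (rule set_add_sub_ideal[OF K]) (use q Y_def in auto)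
  finally have "ideal_pow R (Idl (insert g G)) (p * q) \<subseteq> K"
    unfolding Idl_insert[OF gc Gc] X_def Y_def .
  then show ?case by blast
qed

lemma v_bounded:
  assumes I: "ideal I R" "I \<noteq> {\<zero>}" and fgI: "\<exists>A. finite A \<and> A \<subseteq> carrier R \<and> I = Idl A"
    and N: "ideal_pow R m N \<subseteq> I"
  shows "\<exists>k. \<not> I \<subseteq> ideal_pow R m k"
proof (rule ccontr)
  assume "\<not> ?thesis"
  then have "I \<subseteq> ideal_pow R m (Suc N)" by blast
  also have "\<dots> = ideal_prod R m (ideal_pow R m N)" by (simp add: ideal_pow.simps(2))
  also have "\<dots> \<subseteq> ideal_prod R m I" by (rule ideal_prod_mono_r[OF m_ideal I(1) N])
  finally have sub: "I \<subseteq> ideal_prod R m I" .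
  obtain A where A: "finite A" "A \<subseteq> carrier R" "I = Idl A" using fgI by blast
  have "Idl A = {\<zero>}" by (rule nakayama[OF A(1,2)]) (use sub A(3) in simp)
  then show False using A(3) I(2) by simp
qed

end


context cring
begin

lemma quot_carrier: "carrier (R Quot I) = (\<lambda>x. I +> x) ` carrier R"
  unfolding FactRing_def A_RCOSETS_def' by auto

lemma quot_zero: "\<zero>\<^bsub>R Quot I\<^esub> = I" unfolding FactRing_def by simp

lemma quot_one: "\<one>\<^bsub>R Quot I\<^esub> = I +> \<one>" unfolding FactRing_def by simp

lemma pi_hom: "ideal I R \<Longrightarrow> (\<lambda>x. I +> x) \<in> ring_hom R (R Quot I)"
  using ideal.rcos_ring_hom by blast

lemma pi_mult: "ideal I R \<Longrightarrow> x \<in> carrier R \<Longrightarrow> y \<in> carrier R \<Longrightarrow>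
    (I +> x) \<otimes>\<^bsub>R Quot I\<^esub> (I +> y) = I +> (x \<otimes> y)"
  using ring_hom_mult[OF pi_hom] by metis

lemma pi_add: "ideal I R \<Longrightarrow> x \<in> carrier R \<Longrightarrow> y \<in> carrier R \<Longrightarrow>
    (I +> x) \<oplus>\<^bsub>R Quot I\<^esub> (I +> y) = I +> (x \<oplus> y)"
  using ring_hom_add[OF pi_hom] by metis

lemma pi_Union:
  assumes "ideal I R" "ideal A R" "I \<subseteq> A"
  shows "\<Union> ((\<lambda>x. I +> x) ` A) = A"
proof -
  have "A = (\<Union>j\<in>A. I +> j)" using ideal_incl_iff[OF assms(1,2)] assms(3) by blast
  then show ?thesis by (rule sym)
qed

lemma pi_sub_iff:
  assumes "ideal I R" "ideal A R" "I \<subseteq> A" "ideal B R" "I \<subseteq> B"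
  shows "(\<lambda>x. I +> x) ` A \<subseteq> (\<lambda>x. I +> x) ` B \<longleftrightarrow> A \<subseteq> B"
proof
  assume "(\<lambda>x. I +> x) ` A \<subseteq> (\<lambda>x. I +> x) ` B"
  then have "\<Union> ((\<lambda>x. I +> x) ` A) \<subseteq> \<Union> ((\<lambda>x. I +> x) ` B)" by (rule Union_mono)
  then show "A \<subseteq> B" using pi_Union[OF assms(1,2,3)] pi_Union[OF assms(1,4,5)] by simp
qed auto

lemma pi_inj:
  assumes "ideal I R" "ideal A R" "I \<subseteq> A" "ideal B R" "I \<subseteq> B"
    "(\<lambda>x. I +> x) ` A = (\<lambda>x. I +> x) ` B"
  shows "A = B"
proof -
  have "A = \<Union> ((\<lambda>x. I +> x) ` A)" by (rule pi_Union[OF assms(1,2,3), symmetric])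
  also have "\<dots> = \<Union> ((\<lambda>x. I +> x) ` B)" using assms(6) by simp
  also have "\<dots> = B" by (rule pi_Union[OF assms(1,4,5)])
  finally show ?thesis .
qed

lemma pi_of_Union:
  assumes I: "ideal I R" and J: "ideal J (R Quot I)"
  shows "(\<lambda>x. I +> x) ` (\<Union> J) = J"
proof -
  have sub: "J \<subseteq> carrier (R Quot I)" using J additive_subgroup.a_subset ideal_def by blast
  show ?thesis
  proof
    show "(\<lambda>x. I +> x) ` (\<Union> J) \<subseteq> J"
    proof
      fix Y assume "Y \<in> (\<lambda>x. I +> x) ` (\<Union> J)"
      then obtain x where x: "x \<in> \<Union> J" "Y = I +> x" by blast
      have xc: "x \<in> carrier R" using canonical_proj_vimage_in_carrier[OF I sub] x(1) by blast
      show "Y \<in> J" using canonical_proj_vimage_mem_iff[OF I sub xc] x by simp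
    qed
    show "J \<subseteq> (\<lambda>x. I +> x) ` (\<Union> J)"
    proof
      fix X assume X: "X \<in> J"
      then obtain r where r: "r \<in> carrier R" "X = I +> r" using sub quot_carrier by blast
      then have "r \<in> \<Union> J" using X canonical_proj_vimage_mem_iff[OF I sub r(1)] by simp
      then show "X \<in> (\<lambda>x. I +> x) ` (\<Union> J)" using r(2) by blast
    qed
  qed
qed

lemma Union_quot_ideal:
  assumes I: "ideal I R" and J: "ideal J (R Quot I)"
  shows "ideal (\<Union> J) R" "I \<subseteq> \<Union> J"
proof -
  show "ideal (\<Union> J) R" by (rule quot_ideal_imp_ring_ideal[OF I J])
  have "I \<in> J" using additive_subgroup.zero_closed[OF ideal.axioms(1)[OF J]] quot_zero by simp
  then show "I \<subseteq> \<Union> J" by blast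
qed

lemma pi_ideal: "ideal I R \<Longrightarrow> ideal A R \<Longrightarrow> ideal ((\<lambda>x. I +> x) ` A) (R Quot I)"
  by (rule ring_ideal_imp_quot_ideal)

lemma pi_zero_iff:
  assumes I: "ideal I R" and A: "ideal A R"
  shows "(\<lambda>x. I +> x) ` A = {I} \<longleftrightarrow> A \<subseteq> I"
proof
  assume eq: "(\<lambda>x. I +> x) ` A = {I}"
  show "A \<subseteq> I"
  proof
    fix a assume a: "a \<in> A"
    then have "I +> a = I" using eq by blast
    moreover have "a \<in> carrier R" using ideal.Icarr[OF A a] .
    ultimately show "a \<in> I" using ideal.rcos_const_imp_mem[OF I] by simp
  qed
next
  assume "A \<subseteq> I"
  moreover have "\<zero> \<in> A" using additive_subgroup.zero_closed[OF ideal.axioms(1)[OF A]] .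
  ultimately show "(\<lambda>x. I +> x) ` A = {I}" using a_rcos_zero[OF I] by force
qed

lemma pi_pow:
  assumes I: "ideal I R" and X: "ideal X R"
  shows "ideal_pow (R Quot I) ((\<lambda>x. I +> x) ` X) k = (\<lambda>x. I +> x) ` (ideal_pow R X k)"
proof (induct k)
  case 0 then show ?case by (simp add: quot_carrier ideal_pow.simps(1))
next
  case (Suc k)
  let ?p = "\<lambda>x. I +> x"
  have Xk: "ideal (ideal_pow R X k) R" by (rule ideal_pow_ideal[OF X])
  have prodc: "ideal_prod R X (ideal_pow R X k) \<subseteq> carrier R" by (rule ideal_prod_in_carrier[OF X Xk])
  have "ideal_prod (R Quot I) (?p ` X) (?p ` ideal_pow R X k) = ?p ` ideal_prod R X (ideal_pow R X k)"
  proof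
    show "ideal_prod (R Quot I) (?p ` X) (?p ` ideal_pow R X k) \<subseteq> ?p ` ideal_prod R X (ideal_pow R X k)"
    proof
      fix z assume "z \<in> ideal_prod (R Quot I) (?p ` X) (?p ` ideal_pow R X k)"
      then show "z \<in> ?p ` ideal_prod R X (ideal_pow R X k)"
      proof (induct z rule: ideal_prod.induct)
        case (prod i j)
        then obtain x y where xy: "x \<in> X" "i = I +> x" "y \<in> ideal_pow R X k" "j = I +> y" by blast
        have "i \<otimes>\<^bsub>R Quot I\<^esub> j = I +> (x \<otimes> y)"
          using xy pi_mult[OF I] ideal.Icarr[OF X] ideal.Icarr[OF Xk] by simp
        moreover have "x \<otimes> y \<in> ideal_prod R X (ideal_pow R X k)" using xy by (intro ideal_prod.prod)
        ultimately show ?case by blast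
      next
        case (sum s1 s2)
        then obtain u1 u2 where u: "u1 \<in> ideal_prod R X (ideal_pow R X k)" "s1 = I +> u1"
          "u2 \<in> ideal_prod R X (ideal_pow R X k)" "s2 = I +> u2" by blast
        have "s1 \<oplus>\<^bsub>R Quot I\<^esub> s2 = I +> (u1 \<oplus> u2)" using u pi_add[OF I] prodc by blast
        moreover have "u1 \<oplus> u2 \<in> ideal_prod R X (ideal_pow R X k)" using u by (intro ideal_prod.sum)
        ultimately show ?case by blast
      qed
    qed
    show "?p ` ideal_prod R X (ideal_pow R X k) \<subseteq> ideal_prod (R Quot I) (?p ` X) (?p ` ideal_pow R X k)"
    proof
      fix Z assume "Z \<in> ?p ` ideal_prod R X (ideal_pow R X k)"
      then obtain z where z: "z \<in> ideal_prod R X (ideal_pow R X k)" "Z = I +> z" by blast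
      have "I +> z \<in> ideal_prod (R Quot I) (?p ` X) (?p ` ideal_pow R X k)"
        using z(1)
      proof (induct z rule: ideal_prod.induct)
        case (prod i j)
        have "I +> (i \<otimes> j) = (I +> i) \<otimes>\<^bsub>R Quot I\<^esub> (I +> j)"
          using pi_mult[OF I] prod ideal.Icarr[OF X] ideal.Icarr[OF Xk] by simp
        moreover have "I +> i \<in> ?p ` X" "I +> j \<in> ?p ` ideal_pow R X k" using prod by auto
        ultimately show ?case by (metis ideal_prod.prod)
      next
        case (sum s1 s2)
        have "I +> (s1 \<oplus> s2) = (I +> s1) \<oplus>\<^bsub>R Quot I\<^esub> (I +> s2)"
          using pi_add[OF I] sum prodc by blast
        then show ?case using ideal_prod.sum[OF sum(2) sum(4)] by simp
      qed
      then show "Z \<in> ideal_prod (R Quot I) (?p ` X) (?p ` ideal_pow R X k)" using z(2) by simp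
    qed
  qed
  then show ?case using Suc by (simp add: ideal_pow.simps(2))
qed

end


context cring
begin

lemma length_transfer:
  assumes I: "ideal I R" and B: "ideal B R" and A: "ideal A R" and IB: "I \<subseteq> B" and BA: "B \<subseteq> A"
  shows "module_length (R Quot I) ((\<lambda>x. I +> x) ` B) ((\<lambda>x. I +> x) ` A) = module_length R B A"
proof (rule antisym)
  let ?p = "\<lambda>x. I +> x"
  show "module_length (R Quot I) (?p ` B) (?p ` A) \<le> module_length R B A"
  proof (rule length_le)
    fix r D assume D: "is_chain (R Quot I) (?p ` B) (?p ` A) r D"
    define C where "C i = \<Union> (D i)" for i
    have "is_chain R B A r C"
      unfolding is_chain_def
    proof (intro conjI allI impI)
      show "C 0 = B" using D pi_Union[OF I B IB] unfolding is_chain_def C_def by simp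
      show "C r = A" using D pi_Union[OF I A] IB BA unfolding is_chain_def C_def by simp
      fix i
      show "i \<le> r \<Longrightarrow> ideal (C i) R" using D Union_quot_ideal(1)[OF I] unfolding is_chain_def C_def by simp
      assume i: "i < r"
      have Di: "ideal (D i) (R Quot I)" "ideal (D (Suc i)) (R Quot I)" "D i \<subset> D (Suc i)"
        using D i unfolding is_chain_def by auto
      have "C i \<subseteq> C (Suc i)" unfolding C_def using Di(3) by blast
      moreover have "C i \<noteq> C (Suc i)"
      proof
        assume "C i = C (Suc i)"
        then have "?p ` C i = ?p ` C (Suc i)" by simp
        then have "D i = D (Suc i)" using pi_of_Union[OF I Di(1)] pi_of_Union[OF I Di(2)] unfolding C_def by simp
        then show False using Di(3) by simp
      qed
      ultimately show "C i \<subset> C (Suc i)" by blast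
    qed
    then show "enat r \<le> module_length R B A" by (rule chain_le_length)
  qed
  show "module_length R B A \<le> module_length (R Quot I) (?p ` B) (?p ` A)"
  proof (rule length_le)
    fix r C assume C: "is_chain R B A r C"
    have IC: "I \<subseteq> C i" if "i \<le> r" for i using chain_mono[OF C, of 0 i] that C IB unfolding is_chain_def by auto
    have "is_chain (R Quot I) (?p ` B) (?p ` A) r (\<lambda>i. ?p ` C i)"
      unfolding is_chain_def
    proof (intro conjI allI impI)
      show "?p ` C 0 = ?p ` B" using C unfolding is_chain_def by simp
      show "?p ` C r = ?p ` A" using C unfolding is_chain_def by simp
      fix i
      show "i \<le> r \<Longrightarrow> ideal (?p ` C i) (R Quot I)" using C pi_ideal[OF I] unfolding is_chain_def by simp
      assume i: "i < r"
      have Ci: "ideal (C i) R" "ideal (C (Suc i)) R" "C i \<subset> C (Suc i)"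
        using C i unfolding is_chain_def by auto
      have "?p ` C i \<subseteq> ?p ` C (Suc i)" using Ci(3) by blast
      moreover have "?p ` C i \<noteq> ?p ` C (Suc i)"
      proof
        assume "?p ` C i = ?p ` C (Suc i)"
        then have "C i = C (Suc i)" using pi_inj[OF I Ci(1) IC Ci(2) IC] i by simp
        then show False using Ci(3) by simp
      qed
      ultimately show "?p ` C i \<subset> ?p ` C (Suc i)" by blast
    qed
    then show "enat r \<le> module_length (R Quot I) (?p ` B) (?p ` A)" by (rule chain_le_length)
  qed
qed

lemma Idl_transfer:
  assumes I: "ideal I R" and G: "G \<subseteq> carrier R"
  shows "Idl\<^bsub>R Quot I\<^esub> ((\<lambda>x. I +> x) ` G) = (\<lambda>x. I +> x) ` (Idl G)"
proof
  let ?p = "\<lambda>x. I +> x"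
  have Q: "ring (R Quot I)" by (rule ideal.quotient_is_ring[OF I])
  have pG: "?p ` G \<subseteq> carrier (R Quot I)" using G quot_carrier by blast
  have IG: "ideal (Idl G) R" by (rule genideal_ideal[OF G])
  show "Idl\<^bsub>R Quot I\<^esub> (?p ` G) \<subseteq> ?p ` (Idl G)"
    by (rule ring.genideal_minimal[OF Q pi_ideal[OF I IG]]) (use genideal_self[OF G] in blast)
  define J' where "J' = Idl\<^bsub>R Quot I\<^esub> (?p ` G)"
  have J': "ideal J' (R Quot I)" unfolding J'_def by (rule ring.genideal_ideal[OF Q pG])
  have J'c: "J' \<subseteq> carrier (R Quot I)" using J' additive_subgroup.a_subset ideal_def by blast
  have "G \<subseteq> \<Union> J'"
  proof
    fix g assume g: "g \<in> G"
    then have "I +> g \<in> J'" unfolding J'_def using ring.genideal_self[OF Q pG] by blast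
    then show "g \<in> \<Union> J'" using canonical_proj_vimage_mem_iff[OF I J'c] g G by blast
  qed
  then have "Idl G \<subseteq> \<Union> J'" by (rule genideal_minimal[OF Union_quot_ideal(1)[OF I J']])
  then have "?p ` (Idl G) \<subseteq> ?p ` (\<Union> J')" by blast
  then show "?p ` (Idl G) \<subseteq> Idl\<^bsub>R Quot I\<^esub> (?p ` G)" using pi_of_Union[OF I J'] unfolding J'_def by simp
qed

end

context locr
begin

lemma locr_quot:
  assumes I: "ideal I R" and Im: "I \<subseteq> m"
  shows "locr (R Quot I) ((\<lambda>x. I +> x) ` m)"
proof -
  let ?p = "\<lambda>x. I +> x"
  have Q: "cring (R Quot I)" by (rule ideal.quotient_is_cring[OF I is_cring])
  have Qm: "ideal (?p ` m) (R Quot I)" by (rule pi_ideal[OF I m_ideal])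
  have pmc: "?p ` m \<subseteq> carrier (R Quot I)" using Qm additive_subgroup.a_subset ideal_def by blast
  have mem: "x \<in> carrier R \<Longrightarrow> I +> x \<in> ?p ` m \<longleftrightarrow> x \<in> m" for x
    using canonical_proj_vimage_mem_iff[OF I pmc] pi_Union[OF I m_ideal Im] by simp
  have ax: "locr_axioms (R Quot I) (?p ` m)"
  proof (rule locr_axioms.intro)
    show "ideal (?p ` m) (R Quot I)" by (rule Qm)
    show "\<one>\<^bsub>R Quot I\<^esub> \<notin> ?p ` m" using quot_one mem[of \<one>] m_proper by simp
    fix X assume X: "X \<in> carrier (R Quot I)" "X \<notin> ?p ` m"
    then obtain x where x: "x \<in> carrier R" "X = I +> x" using quot_carrier by blast
    then have xm: "x \<notin> m" using X(2) by blast
    then have xu: "x \<in> Units R" using m_units x(1) by simp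
    define y where "y = inv x"
    have yc: "y \<in> carrier R" unfolding y_def using Units_inv_closed[OF xu] .
    have xy: "x \<otimes> y = \<one>" "y \<otimes> x = \<one>" unfolding y_def using xu by (simp_all add: Units_r_inv Units_l_inv)
    have "(I +> y) \<otimes>\<^bsub>R Quot I\<^esub> X = \<one>\<^bsub>R Quot I\<^esub>" "X \<otimes>\<^bsub>R Quot I\<^esub> (I +> y) = \<one>\<^bsub>R Quot I\<^esub>"
      using x xy yc pi_mult[OF I] quot_one by simp_all
    moreover have "I +> y \<in> carrier (R Quot I)" using yc quot_carrier by blast
    ultimately show "X \<in> Units (R Quot I)" using X(1) unfolding Units_def by blast
  qed
  show ?thesis by (rule locr.intro[OF Q ax])
qed

end


theorem theorem3p3:
  fixes S :: "('a, 'b) ring_scheme" and n I :: "'a set"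
  assumes S: "noetherian_local_ring S n"
    and I: "primary_to S n I"
    and I0: "I \<noteq> {\<zero>\<^bsub>S\<^esub>}"
  defines "R \<equiv> S Quot I"
    and "m \<equiv> quot_ideal S I n"
    and "v \<equiv> v_order S n I"
  shows "(enat (socle_degree R m) + (\<Sum>i<v. hilbert_fun S n i) + 1
           \<le> module_length S I (carrier S) + enat v)
    \<and> ((\<nexists>k. I = ideal_pow S n k) \<longrightarrow>
      ((enat (socle_degree R m) + (\<Sum>i<v. hilbert_fun S n i) + 1
           = module_length S I (carrier S) + enat v)
       \<longleftrightarrow> min_gens R (ideal_pow R m v) = 1)
    \<and> (min_gens R (ideal_pow R m v) = 1
       \<longleftrightarrow> ((\<forall>i<v. hilbert_fun R m i = hilbert_fun S n i)
           \<and> (\<forall>i. v \<le> i \<and> i \<le> socle_degree R m \<longrightarrow> hilbert_fun R m i = 1)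
           \<and> (\<forall>i>socle_degree R m. hilbert_fun R m i = 0))))"
proof -
  have noeth: "noetherian_ring S" and cr: "cring S" and nmax: "maximalideal n S"
    and uniq: "\<forall>J. maximalideal J S \<longrightarrow> J = n"
    using S unfolding noetherian_local_ring_def local_ring_def by auto
  interpret Sc: cring S by (rule cr)
  have nI: "ideal n S" using nmax maximalideal.axioms(1) by blast
  have n1: "\<one>\<^bsub>S\<^esub> \<notin> n"
  proof
    assume "\<one>\<^bsub>S\<^esub> \<in> n"
    then have "n = carrier S" by (rule ideal.one_imp_carrier[OF nI])
    then show False using maximalideal.I_notcarr[OF nmax] by simp
  qed
  have ax: "locr_axioms S n"
    by (rule locr_axioms.intro[OF nI n1]) (rule Sc.local_units[OF noeth nmax uniq])
  interpret Sl: locr S n by (rule locr.intro[OF cr ax])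
  have II: "ideal I S" and Icar: "I \<noteq> carrier S"
    and rad: "{x \<in> carrier S. \<exists>k::nat. x [^]\<^bsub>S\<^esub> k \<in> I} = n"
    using I unfolding primary_to_def by auto
  have In: "I \<subseteq> n"
  proof
    fix x assume x: "x \<in> I"
    have xc: "x \<in> carrier S" using ideal.Icarr[OF II x] .
    then have "x [^]\<^bsub>S\<^esub> (1::nat) \<in> I" using x by simp
    then show "x \<in> n" using rad xc by blast
  qed
  obtain Gn where Gn: "Gn \<subseteq> carrier S" "finite Gn" "n = Idl\<^bsub>S\<^esub> Gn"
    using noetherian_ring.finetely_gen[OF noeth nI] by blast
  have "\<forall>g\<in>Gn. \<exists>k::nat. g [^]\<^bsub>S\<^esub> k \<in> I"
  proof
    fix g assume "g \<in> Gn"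
    then have "g \<in> n" using Gn Sc.genideal_self by blast
    then show "\<exists>k::nat. g [^]\<^bsub>S\<^esub> k \<in> I" using rad by blast
  qed
  then obtain N where N: "ideal_pow S n N \<subseteq> I" using Sl.rad_pow[OF Gn(2) Gn(1) II] Gn(3) by auto
  obtain GI where GI: "GI \<subseteq> carrier S" "finite GI" "I = Idl\<^bsub>S\<^esub> GI"
    using noetherian_ring.finetely_gen[OF noeth II] by blast
  obtain k0 where k0: "\<not> I \<subseteq> ideal_pow S n k0"
    using Sl.v_bounded[OF II I0 _ N] GI by blast
  have Qbd: "\<forall>y. I \<subseteq> ideal_pow S n y \<longrightarrow> y \<le> k0"
  proof (intro allI impI)
    fix y assume y: "I \<subseteq> ideal_pow S n y"
    show "y \<le> k0"
    proof (rule ccontr)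
      assume "\<not> y \<le> k0"
      then have "ideal_pow S n y \<subseteq> ideal_pow S n k0" using Sc.ideal_pow_antimono[OF nI] by simp
      then show False using y k0 by blast
    qed
  qed
  have Q0: "I \<subseteq> ideal_pow S n 0" using ideal.Icarr[OF II] by (auto simp: ideal_pow.simps(1))
  have vQ: "I \<subseteq> ideal_pow S n v" unfolding v_def v_order_def
    by (rule GreatestI_nat[where k=0 and b=k0]) (use Q0 Qbd in auto)
  have vmax: "\<And>y. I \<subseteq> ideal_pow S n y \<Longrightarrow> y \<le> v" unfolding v_def v_order_def
    by (rule Greatest_le_nat[where b=k0]) (use Qbd in auto)
  have vS: "\<not> I \<subseteq> ideal_pow S n (Suc v)" using vmax[of "Suc v"] by auto
  have v1: "1 \<le> v" using vmax[of 1] In Sc.ideal_pow_one[OF nI] by simp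
  let ?p = "\<lambda>x. I +>\<^bsub>S\<^esub> x"
  have mdef: "m = ?p ` n" unfolding m_def quot_ideal_def by simp
  have Rl_loc: "locr R m" unfolding R_def mdef by (rule Sl.locr_quot[OF II In])
  interpret Rl: locr R m by (rule Rl_loc)
  have Pk: "ideal_pow R m k = ?p ` (ideal_pow S n k)" for k
    unfolding R_def mdef by (rule Sc.pi_pow[OF II nI])
  have nkI: "ideal (ideal_pow S n k) S" for k by (rule Sc.ideal_pow_ideal[OF nI])
  have zR: "\<zero>\<^bsub>R\<^esub> = I" unfolding R_def by (rule Sc.quot_zero)
  have Pzero: "ideal_pow R m k = {\<zero>\<^bsub>R\<^esub>} \<longleftrightarrow> ideal_pow S n k \<subseteq> I" for k
    unfolding Pk zR using Sc.pi_zero_iff[OF II nkI] by simp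
  have RN: "ideal_pow R m N = {\<zero>\<^bsub>R\<^esub>}" using Pzero N by simp
  define s where "s = socle_degree R m"
  have sprops: "\<And>k. ideal_pow R m k \<noteq> {\<zero>\<^bsub>R\<^esub>} \<Longrightarrow> k \<le> s"
    unfolding s_def by (rule Rl.socle_props(3)[OF RN])
  have vs: "v \<le> Suc s"
  proof -
    obtain w where w: "v = Suc w" using v1 by (cases v) auto
    have "\<not> ideal_pow S n w \<subseteq> I"
    proof
      assume wI: "ideal_pow S n w \<subseteq> I"
      have sub: "ideal_pow S n v \<subseteq> ideal_pow S n w" unfolding w by (rule Sc.ideal_pow_Suc_sub[OF nI])
      have eq: "ideal_pow S n w = ideal_pow S n v" using wI vQ sub by blast
      have "ideal_pow S n (Suc v) = ideal_prod S n (ideal_pow S n v)" by (simp add: ideal_pow.simps(2))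
      also have "\<dots> = ideal_prod S n (ideal_pow S n w)" using eq by simp
      also have "\<dots> = ideal_pow S n v" unfolding w by (simp add: ideal_pow.simps(2))
      finally show False using vS vQ by simp
    qed
    then have "w \<le> s" using sprops Pzero by blast
    then show ?thesis using w by simp
  qed
  have fgR: "\<exists>G. finite G \<and> G \<subseteq> ideal_pow R m k \<and> Idl\<^bsub>R\<^esub> G = ideal_pow R m k" for k
  proof -
    obtain G where G: "G \<subseteq> carrier S" "finite G" "ideal_pow S n k = Idl\<^bsub>S\<^esub> G"
      using noetherian_ring.finetely_gen[OF noeth nkI] by blast
    have "Idl\<^bsub>R\<^esub> (?p ` G) = ?p ` (ideal_pow S n k)"
      unfolding R_def G(3) by (rule Sc.Idl_transfer[OF II G(1)])
    moreover have "?p ` G \<subseteq> ?p ` (ideal_pow S n k)" using G(3) Sc.genideal_self[OF G(1)] by blast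
    ultimately show ?thesis using G(2) Pk by (intro exI[of _ "?p ` G"]) auto
  qed
  have finR: "module_length R {\<zero>\<^bsub>R\<^esub>} (carrier R) \<noteq> \<infinity>"
    by (rule Rl.finite_length[OF RN fgR])
  have Ltr: "module_length R {\<zero>\<^bsub>R\<^esub>} (carrier R) = module_length S I (carrier S)"
  proof -
    have "{\<zero>\<^bsub>R\<^esub>} = ?p ` I" unfolding zR using Sc.pi_zero_iff[OF II II] by simp
    moreover have "carrier R = ?p ` carrier S" unfolding R_def by (rule Sc.quot_carrier)
    ultimately show ?thesis
      unfolding R_def using Sc.length_transfer[OF II II Sc.oneideal] ideal.Icarr[OF II] by (metis subsetI subset_refl)
  qed
  have hS: "\<forall>i<v. hilbert_fun R m i = hilbert_fun S n i"
  proof (intro allI impI)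
    fix i assume i: "i < v"
    have "I \<subseteq> ideal_pow S n (Suc i)" using vQ Sc.ideal_pow_antimono[OF nI, of "Suc i" v] i by auto
    moreover have "ideal_pow S n (Suc i) \<subseteq> ideal_pow S n i" by (rule Sc.ideal_pow_Suc_sub[OF nI])
    ultimately have "module_length R (?p ` ideal_pow S n (Suc i)) (?p ` ideal_pow S n i)
        = module_length S (ideal_pow S n (Suc i)) (ideal_pow S n i)"
      unfolding R_def by (intro Sc.length_transfer[OF II nkI nkI]) 
    then show "hilbert_fun R m i = hilbert_fun S n i" unfolding hilbert_fun_def Pk .
  qed
  have main: "enat s + (\<Sum>i<v. hilbert_fun S n i) + 1 \<le> module_length R {\<zero>\<^bsub>R\<^esub>} (carrier R) + enat v \<and>
    (v \<le> s \<longrightarrow>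
      ((enat s + (\<Sum>i<v. hilbert_fun S n i) + 1 = module_length R {\<zero>\<^bsub>R\<^esub>} (carrier R) + enat v) \<longleftrightarrow> min_gens R (ideal_pow R m v) = 1)
      \<and> (min_gens R (ideal_pow R m v) = 1 \<longleftrightarrow>
          ((\<forall>i<v. hilbert_fun R m i = hilbert_fun S n i)
           \<and> (\<forall>i. v \<le> i \<and> i \<le> s \<longrightarrow> hilbert_fun R m i = 1)
           \<and> (\<forall>i>s. hilbert_fun R m i = 0))))"
    unfolding s_def by (rule Rl.abstract_main[OF RN v1 vs[unfolded s_def] finR hS fgR])
  have np: "v \<le> s" if "\<nexists>k. I = ideal_pow S n k"
  proof -
    have "\<not> ideal_pow S n v \<subseteq> I" using that vQ by blast
    then show ?thesis using sprops Pzero by blast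
  qed
  show ?thesis using main np unfolding Ltr s_def by blast
qed


end
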